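(* Let $\mathcal D$ be a finite nonempty set of cardinality $D$. For $n\ge1$ let $p_n$ be the dimension of the space of primitive elements of $\mathcal H^{\mathcal D}_{P,R}$ that are homogeneous of weight $n$, and $P(X)=\sum_np_nX^n$. Then $$P(X)=\frac{1-\sqrt{1-4DX}}{2},\qquad p_n=\frac{(2n-2)!}{n!\,(n-1)!}D^n=D^n\tau_n,$$ where $\tau_n$ is the number of undecorated planar rooted trees with $n$ vertices.
   Context: $\mathcal H^{\mathcal D}_{P,R}$ is the free associative unital $\mathbb Q$-algebra on the set of planar rooted trees (finite trees with a root, embedded in the plane, edges oriented away from the root) decorated by $\mathcal D$; its basis is the set of planar forests $t_1\cdots t_n$ ($1$ = empty forest), graded by weight (total number of vertices). Coproduct: $\Delta(F)=\sum_cP^c(F)\otimes R^c(F)$ over tuples $c=(c_i)$, each $c_i$ the empty cut of $t_i$ ($P=1,R=t_i$), the total cut ($P=t_i,R=1$), or an admissible cut (a nonempty set of edges of $t_i$ such that every oriented path meets at most one of them, with $R^{c_i}(t_i)$ the component of the root and $P^{c_i}(t_i)$ the left-to-right planar forest of the other components); $P^c(F)=\prod P^{c_i}(t_i)$, $R^c(F)=\prod R^{c_i}(t_i)$. An element $x$ is primitive if $\Delta(x)=x\otimes1+1\otimes x$. *)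

theory Defs
  imports "HOL-Analysis.Analysis" "HOL-Library.Poly_Mapping"
begin

datatype 'd ptree = Node 'd "'d ptree list"

text \<open>Planar forests = words of trees; the empty list is the unit (empty forest).\<close>
type_synonym 'd pforest = "'d ptree list"

fun tsize :: "'d ptree \<Rightarrow> nat" where
  "tsize (Node d ts) = Suc (sum_list (map tsize ts))"

definition fweight :: "'d pforest \<Rightarrow> nat" where
  "fweight F = sum_list (map tsize F)"

text \<open>Vertices are addressed by paths from the root (list of child indices).
  Each non-root vertex is identified with the edge entering it.\<close>
fun subtree :: "'d ptree \<Rightarrow> nat list \<Rightarrow> 'd ptree option" where
  "subtree t [] = Some t"
| "subtree (Node d ts) (i # p) = (if i < length ts then subtree (ts ! i) p else None)"

definition verts :: "'d ptree \<Rightarrow> nat list set" where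
  "verts t = {p. subtree t p \<noteq> None}"

text \<open>Admissible cut: a nonempty set of edges (given by their lower vertices) such that
  every oriented path meets at most one of them.\<close>
definition admissible_cut :: "'d ptree \<Rightarrow> nat list set \<Rightarrow> bool" where
  "admissible_cut t S \<longleftrightarrow> S \<noteq> {} \<and> S \<subseteq> verts t - {[]} \<and>
     (\<forall>p r. p \<in> S \<and> p @ r \<in> S \<longrightarrow> r = [])"

text \<open>Root component R and planar forest P of the cut-off components.\<close>
fun cutR :: "'d ptree \<Rightarrow> nat list set \<Rightarrow> 'd ptree"
and cutRs :: "nat \<Rightarrow> 'd ptree list \<Rightarrow> nat list set \<Rightarrow> 'd ptree list" where
  "cutR (Node d ts) S = Node d (cutRs 0 ts S)"
| "cutRs i [] S = []"
| "cutRs i (t # ts) S = (if [i] \<in> S then cutRs (Suc i) ts S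
      else cutR t {p. i # p \<in> S} # cutRs (Suc i) ts S)"

fun cutP :: "'d ptree \<Rightarrow> nat list set \<Rightarrow> 'd pforest"
and cutPs :: "nat \<Rightarrow> 'd ptree list \<Rightarrow> nat list set \<Rightarrow> 'd pforest" where
  "cutP (Node d ts) S = cutPs 0 ts S"
| "cutPs i [] S = []"
| "cutPs i (t # ts) S = (if [i] \<in> S then t # cutPs (Suc i) ts S
      else cutP t {p. i # p \<in> S} @ cutPs (Suc i) ts S)"

datatype cut_choice = EmptyCut | TotalCut | AdmCut "nat list set"

definition valid_cut :: "'d ptree \<Rightarrow> cut_choice \<Rightarrow> bool" where
  "valid_cut t c = (case c of EmptyCut \<Rightarrow> True | TotalCut \<Rightarrow> True
      | AdmCut S \<Rightarrow> admissible_cut t S)"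

definition cutPR :: "'d ptree \<Rightarrow> cut_choice \<Rightarrow> 'd pforest \<times> 'd pforest" where
  "cutPR t c = (case c of EmptyCut \<Rightarrow> ([], [t]) | TotalCut \<Rightarrow> ([t], [])
      | AdmCut S \<Rightarrow> (cutP t S, [cutR t S]))"

definition cut_tuples :: "'d pforest \<Rightarrow> cut_choice list set" where
  "cut_tuples F = {cs. length cs = length F \<and> (\<forall>i<length F. valid_cut (F ! i) (cs ! i))}"

definition Pc :: "'d pforest \<Rightarrow> cut_choice list \<Rightarrow> 'd pforest" where
  "Pc F cs = concat (map (\<lambda>i. fst (cutPR (F ! i) (cs ! i))) [0..<length F])"

definition Rc :: "'d pforest \<Rightarrow> cut_choice list \<Rightarrow> 'd pforest" where
  "Rc F cs = concat (map (\<lambda>i. snd (cutPR (F ! i) (cs ! i))) [0..<length F])"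

text \<open>Coefficient of A \<otimes> B in \<Delta>(F).\<close>
definition coprod_coeff :: "'d pforest \<Rightarrow> 'd pforest \<Rightarrow> 'd pforest \<Rightarrow> nat" where
  "coprod_coeff F A B = card {cs \<in> cut_tuples F. Pc F cs = A \<and> Rc F cs = B}"

text \<open>Elements of the algebra: finitely supported Q-linear combinations of forests.
  The coproduct of x, as coefficient function on the basis A \<otimes> B of H \<otimes> H.\<close>
definition coprod :: "('d pforest \<Rightarrow>\<^sub>0 rat) \<Rightarrow> 'd pforest \<Rightarrow> 'd pforest \<Rightarrow> rat" where
  "coprod x A B = (\<Sum>F\<in>Poly_Mapping.keys x. Poly_Mapping.lookup x F * of_nat (coprod_coeff F A B))"

definition primitive :: "('d pforest \<Rightarrow>\<^sub>0 rat) \<Rightarrow> bool" where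
  "primitive x \<longleftrightarrow> (\<forall>A B. coprod x A B =
      (if B = [] then Poly_Mapping.lookup x A else 0) + (if A = [] then Poly_Mapping.lookup x B else 0))"

definition in_HD :: "'d set \<Rightarrow> ('d pforest \<Rightarrow>\<^sub>0 rat) \<Rightarrow> bool" where
  "in_HD Dset x \<longleftrightarrow> (\<forall>F\<in>Poly_Mapping.keys x. \<forall>t\<in>set F. set_ptree t \<subseteq> Dset)"

definition homogeneous :: "nat \<Rightarrow> ('d pforest \<Rightarrow>\<^sub>0 rat) \<Rightarrow> bool" where
  "homogeneous n x \<longleftrightarrow> (\<forall>F\<in>Poly_Mapping.keys x. fweight F = n)"

definition prim_space :: "'d set \<Rightarrow> nat \<Rightarrow> ('d pforest \<Rightarrow>\<^sub>0 rat) set" where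
  "prim_space Dset n = {x. in_HD Dset x \<and> homogeneous n x \<and> primitive x}"

definition qscale :: "rat \<Rightarrow> ('a \<Rightarrow>\<^sub>0 rat) \<Rightarrow> ('a \<Rightarrow>\<^sub>0 rat)" where
  "qscale c x = Poly_Mapping.map (\<lambda>v. c * v) x"

definition prim_dim :: "'d set \<Rightarrow> nat \<Rightarrow> nat" where
  "prim_dim Dset n = vector_space.dim qscale (prim_space Dset n)"

definition tau :: "nat \<Rightarrow> nat" where
  "tau n = card {t :: unit ptree. tsize t = n}"

end

theory Submission
  imports Defs "HOL-Library.Multiset" "HOL-Computational_Algebra.Formal_Power_Series"
begin

definition bindm :: "'a multiset \<Rightarrow> ('a \<Rightarrow> 'b multiset) \<Rightarrow> 'b multiset" where
  "bindm M f = sum_mset (image_mset f M)"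

lemma bindm_empty[simp]: "bindm {#} f = {#}" by (simp add: bindm_def)
lemma bindm_add_mset[simp]: "bindm (add_mset x M) f = f x + bindm M f" by (simp add: bindm_def)
lemma bindm_plus[simp]: "bindm (M + N) f = bindm M f + bindm N f" by (simp add: bindm_def)
lemma bindm_single[simp]: "bindm {#x#} f = f x" by (simp add: bindm_def)

lemma bindm_image: "bindm (image_mset g M) f = bindm M (\<lambda>x. f (g x))"
  by (induction M) auto

lemma image_bindm: "image_mset g (bindm M f) = bindm M (\<lambda>x. image_mset g (f x))"
  by (induction M) auto

lemma bindm_assoc: "bindm (bindm M f) g = bindm M (\<lambda>x. bindm (f x) g)"
  by (induction M) auto

lemma bindm_cong: "(\<And>x. x \<in># M \<Longrightarrow> f x = g x) \<Longrightarrow> bindm M f = bindm M g"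
  by (induction M) auto

lemma bindm_plus2: "bindm M (\<lambda>x. f x + g x) = bindm M f + bindm M g"
  by (induction M) auto

lemma bindm_empty2[simp]: "bindm M (\<lambda>x. {#}) = {#}"
  by (induction M) auto

lemma bindm_single2: "bindm M (\<lambda>x. {#f x#}) = image_mset f M"
  by (induction M) auto

lemma bindm_comm: "bindm M (\<lambda>x. bindm N (\<lambda>y. h x y)) = bindm N (\<lambda>y. bindm M (\<lambda>x. h x y))"
proof (induction M)
  case empty
  then show ?case by simp
next
  case (add x M)
  then show ?case by (simp add: bindm_plus2)
qed

lemma set_bindm: "set_mset (bindm M f) = (\<Union>x\<in>set_mset M. set_mset (f x))"
  by (induction M) auto

lemma count_bindm: "count (bindm M f) y = (\<Sum>x\<in>#M. count (f x) y)"
  by (induction M) auto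

definition pprod :: "('a list \<times> 'b list) multiset \<Rightarrow> ('a list \<times> 'b list) multiset \<Rightarrow> ('a list \<times> 'b list) multiset" where
  "pprod M N = bindm M (\<lambda>(a,b). image_mset (\<lambda>(c,d). (a@c, b@d)) N)"

lemma mset_set_times:
  assumes "finite A" "finite B"
  shows "image_mset h (mset_set (A \<times> B)) = bindm (mset_set A) (\<lambda>a. image_mset (\<lambda>b. h (a,b)) (mset_set B))"
  using assms(1)
proof (induction A rule: finite_induct)
  case empty
  then show ?case by simp
next
  case (insert a A)
  have "insert a A \<times> B = ({a} \<times> B) \<union> (A \<times> B)" by auto
  moreover have "({a} \<times> B) \<inter> (A \<times> B) = {}" using insert by auto
  ultimately have "mset_set (insert a A \<times> B) = mset_set ({a} \<times> B) + mset_set (A \<times> B)"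
    using insert assms by (simp add: mset_set_Union)
  moreover have "{a} \<times> B = Pair a ` B" by auto
  moreover have "mset_set (Pair a ` B) = image_mset (Pair a) (mset_set B)"
    by (simp add: image_mset_mset_set inj_on_def)
  ultimately show ?case using insert by (simp add: multiset.map_comp o_def)
qed

fun Dt :: "'d ptree \<Rightarrow> ('d pforest \<times> 'd pforest) multiset"
and Df :: "'d ptree list \<Rightarrow> ('d pforest \<times> 'd pforest) multiset" where
  "Dt (Node d G) = add_mset ([Node d G], []) (image_mset (\<lambda>(P,R). (P, [Node d R])) (Df G))"
| "Df [] = {#([],[])#}"
| "Df (t # G) = pprod (Dt t) (Df G)"

lemma verts_Node: "verts (Node d ts) = insert [] {i # p | i p. i < length ts \<and> p \<in> verts (ts ! i)}"
proof -
  have "x \<in> verts (Node d ts) \<longleftrightarrow> x \<in> insert [] {i # p | i p. i < length ts \<and> p \<in> verts (ts ! i)}" for x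
    by (cases x) (auto simp: verts_def)
  then show ?thesis by blast
qed

lemma finite_verts: "finite (verts t)"
proof (induction t)
  case (Node d ts)
  have "{i # p | i p. i < length ts \<and> p \<in> verts (ts ! i)} = (\<Union>i<length ts. Cons i ` verts (ts ! i))"
    by auto
  moreover have "finite (\<Union>i<length ts. Cons i ` verts (ts ! i))"
    using Node by auto
  ultimately show ?case by (simp add: verts_Node)
qed

definition Reg :: "nat \<Rightarrow> 'd ptree list \<Rightarrow> nat list set" where
  "Reg i G = {k # p | k p. i \<le> k \<and> k < i + length G \<and> p \<in> verts (G ! (k - i))}"

definition antichain :: "nat list set \<Rightarrow> bool" where
  "antichain S \<longleftrightarrow> (\<forall>p r. p \<in> S \<and> p @ r \<in> S \<longrightarrow> r = [])"

definition CSF :: "nat \<Rightarrow> 'd ptree list \<Rightarrow> nat list set set" where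
  "CSF i G = {S. S \<subseteq> Reg i G \<and> antichain S}"

definition Ch :: "'d ptree \<Rightarrow> nat list set set" where
  "Ch t = {a. a \<subseteq> verts t \<and> antichain a}"

definition chf :: "'d ptree \<Rightarrow> nat list set \<Rightarrow> 'd pforest \<times> 'd pforest" where
  "chf t a = (if [] \<in> a then ([t],[]) else (cutP t a, [cutR t a]))"

lemma Reg_Nil[simp]: "Reg i [] = {}" by (auto simp: Reg_def)

lemma Reg_Cons: "Reg i (t # G) = Cons i ` verts t \<union> Reg (Suc i) G"
proof -
  have "x \<in> Reg i (t # G) \<longleftrightarrow> x \<in> Cons i ` verts t \<union> Reg (Suc i) G" for x
  proof
    assume "x \<in> Reg i (t # G)"
    then obtain k p where x: "x = k # p" "i \<le> k" "k < i + Suc (length G)" "p \<in> verts ((t#G) ! (k - i))"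
      by (auto simp: Reg_def)
    show "x \<in> Cons i ` verts t \<union> Reg (Suc i) G"
    proof (cases "k = i")
      case True then show ?thesis using x by auto
    next
      case False
      then have "k - i = Suc (k - Suc i)" using x by auto
      then show ?thesis using x False unfolding Reg_def by auto
    qed
  next
    assume "x \<in> Cons i ` verts t \<union> Reg (Suc i) G"
    then show "x \<in> Reg i (t # G)"
    proof
      assume "x \<in> Cons i ` verts t" then show ?thesis by (auto simp: Reg_def)
    next
      assume "x \<in> Reg (Suc i) G"
      then obtain k p where x: "x = k # p" "Suc i \<le> k" "k < Suc i + length G" "p \<in> verts (G ! (k - Suc i))"
        by (auto simp: Reg_def)
      then have "k - i = Suc (k - Suc i)" by auto
      then show ?thesis using x unfolding Reg_def by force
    qed
  qed
  then show ?thesis by blast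
qed

lemma Reg_hd: "q \<in> Reg j G \<Longrightarrow> \<exists>k p. q = k # p \<and> j \<le> k"
  by (auto simp: Reg_def)

lemma verts_Node_Reg: "verts (Node d G) = insert [] (Reg 0 G)"
  by (auto simp: verts_Node Reg_def)

lemma finite_Reg: "finite (Reg i G)"
proof (induction G arbitrary: i)
  case Nil then show ?case by simp
next
  case (Cons t G) then show ?case by (simp add: Reg_Cons finite_verts)
qed

lemma finite_CSF: "finite (CSF i G)"
  by (rule finite_subset[of _ "Pow (Reg i G)"]) (auto simp: finite_Reg CSF_def)

lemma finite_Ch: "finite (Ch t)"
  by (rule finite_subset[of _ "Pow (verts t)"]) (auto simp: finite_verts Ch_def)

lemma Ch_Node: "Ch (Node d G) = insert {[]} (CSF 0 G)" and not_in_CSF: "{[]} \<notin> CSF i G"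
proof -
  show "{[]} \<notin> CSF i G" using Reg_hd[of "[]" i G] by (auto simp: CSF_def)
  show "Ch (Node d G) = insert {[]} (CSF 0 G)"
  proof (intro set_eqI iffI)
    fix a assume a: "a \<in> Ch (Node d G)"
    show "a \<in> insert {[]} (CSF 0 G)"
    proof (cases "[] \<in> a")
      case True
      have "p = []" if "p \<in> a" for p
      proof -
        have "[] \<in> a \<and> [] @ p \<in> a" using True that by simp
        then show ?thesis using a unfolding Ch_def antichain_def by blast
      qed
      then have "a = {[]}" using True by blast
      then show ?thesis by simp
    next
      case False
      then have "a \<subseteq> Reg 0 G" using a unfolding Ch_def verts_Node_Reg by blast
      then show ?thesis using a by (simp add: Ch_def CSF_def)
    qed
  next
    fix a assume "a \<in> insert {[]} (CSF 0 G)"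
    then consider "a = {[]}" | "a \<in> CSF 0 G" by blast
    then show "a \<in> Ch (Node d G)"
    proof cases
      case 1
      have "antichain {[]}" unfolding antichain_def by simp
      moreover have "[] \<in> verts (Node d G)" by (simp add: verts_Node_Reg)
      ultimately show ?thesis using 1 by (simp add: Ch_def)
    next
      case 2
      then show ?thesis unfolding Ch_def CSF_def verts_Node_Reg by blast
    qed
  qed
qed

lemma CSF_Cons: "CSF i (t # G) = (\<lambda>(a,S'). Cons i ` a \<union> S') ` (Ch t \<times> CSF (Suc i) G)"
proof (intro set_eqI iffI)
  fix S assume S: "S \<in> CSF i (t # G)"
  define a where "a = {p. i # p \<in> S}"
  define S' where "S' = S \<inter> Reg (Suc i) G"
  have SR: "S \<subseteq> Cons i ` verts t \<union> Reg (Suc i) G" using S by (simp add: CSF_def Reg_Cons)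
  have "S = Cons i ` a \<union> S'" using SR unfolding a_def S'_def by auto
  moreover have "a \<subseteq> verts t"
  proof
    fix p assume "p \<in> a"
    then have "i # p \<in> S" by (simp add: a_def)
    then show "p \<in> verts t" using SR Reg_hd[of "i # p" "Suc i" G] by auto
  qed
  moreover have "antichain a" unfolding antichain_def
  proof (intro allI impI)
    fix p r assume "p \<in> a \<and> p @ r \<in> a"
    then have "i # p \<in> S" "(i # p) @ r \<in> S" by (auto simp: a_def)
    then show "r = []" using S unfolding CSF_def antichain_def by blast
  qed
  moreover have "S' \<in> CSF (Suc i) G" using S unfolding S'_def CSF_def antichain_def by auto
  ultimately show "S \<in> (\<lambda>(a,S'). Cons i ` a \<union> S') ` (Ch t \<times> CSF (Suc i) G)"
    unfolding Ch_def by blast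
next
  fix S assume "S \<in> (\<lambda>(a,S'). Cons i ` a \<union> S') ` (Ch t \<times> CSF (Suc i) G)"
  then obtain a S' where S: "S = Cons i ` a \<union> S'" and a: "a \<subseteq> verts t" "antichain a"
    and S': "S' \<subseteq> Reg (Suc i) G" "antichain S'"
    by (auto simp: Ch_def CSF_def)
  have "S \<subseteq> Reg i (t # G)" using S a S' by (auto simp: Reg_Cons)
  moreover have "antichain S"
    unfolding antichain_def
  proof (intro allI impI)
    fix p r assume pr: "p \<in> S \<and> p @ r \<in> S"
    show "r = []"
    proof (cases "p \<in> Cons i ` a")
      case True
      then obtain p' where p': "p = i # p'" "p' \<in> a" by auto
      have "p @ r \<notin> S'" using S'(1) Reg_hd[of "p @ r" "Suc i" G] p' by auto
      then have "p @ r \<in> Cons i ` a" using pr S by auto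
      then have "p' @ r \<in> a" using p' by auto
      then show ?thesis using a(2) p' unfolding antichain_def by blast
    next
      case False
      then have "p \<in> S'" using pr S by auto
      then obtain k q where kq: "p = k # q" "Suc i \<le> k" using S'(1) Reg_hd by blast
      then have "p @ r \<notin> Cons i ` a" by auto
      then have "p @ r \<in> S'" using pr S by auto
      then show ?thesis using S'(2) \<open>p \<in> S'\<close> unfolding antichain_def by blast
    qed
  qed
  ultimately show "S \<in> CSF i (t # G)" by (simp add: CSF_def)
qed

lemma inj_CSF_Cons: "inj_on (\<lambda>(a,S'). Cons i ` a \<union> S') (Ch t \<times> CSF (Suc i) G)"
proof (rule inj_onI, clarify)
  fix a S' b T'
  assume S': "S' \<in> CSF (Suc i) G" and T': "T' \<in> CSF (Suc i) G"
    and eq: "Cons i ` a \<union> S' = Cons i ` b \<union> T'"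
  have nS: "\<And>p. i # p \<notin> S'" using S' Reg_hd[of _ "Suc i" G] by (fastforce simp: CSF_def)
  have nT: "\<And>p. i # p \<notin> T'" using T' Reg_hd[of _ "Suc i" G] by (fastforce simp: CSF_def)
  have "a = {p. i # p \<in> Cons i ` a \<union> S'}" using nS by auto
  also have "\<dots> = {p. i # p \<in> Cons i ` b \<union> T'}" using eq by simp
  also have "\<dots> = b" using nT by auto
  finally have ab: "a = b" .
  have "S' = (Cons i ` a \<union> S') - Cons i ` a" using nS by auto
  also have "\<dots> = (Cons i ` b \<union> T') - Cons i ` b" using eq ab by simp
  also have "\<dots> = T'" using nT by auto
  finally show "a = b \<and> S' = T'" using ab by simp
qed

lemma cutPs_cong:
  "(\<And>k p. j \<le> k \<Longrightarrow> (k # p \<in> S) = (k # p \<in> S')) \<Longrightarrow>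
    cutPs j G S = cutPs j G S' \<and> cutRs j G S = cutRs j G S'"
proof (induction G arbitrary: j)
  case Nil then show ?case by simp
next
  case (Cons t G)
  have a: "([j] \<in> S) = ([j] \<in> S')" using Cons.prems by simp
  have b: "{p. j # p \<in> S} = {p. j # p \<in> S'}" using Cons.prems by simp
  have c: "cutPs (Suc j) G S = cutPs (Suc j) G S' \<and> cutRs (Suc j) G S = cutRs (Suc j) G S'"
    using Cons.IH[of "Suc j"] Cons.prems by simp
  show ?case using a b c by simp
qed

lemma cut_empty: "cutP t {} = [] \<and> cutR t {} = t"
proof (induction t)
  case (Node d ts)
  have "cutPs i ts {} = [] \<and> cutRs i ts {} = ts" for i
    using Node by (induction ts arbitrary: i) auto
  then show ?case by simp
qed

lemma cutPs_Cons_split: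
  assumes "S' \<in> CSF (Suc i) G"
  shows "cutPs i (t # G) (Cons i ` a \<union> S') = fst (chf t a) @ cutPs (Suc i) G S'
       \<and> cutRs i (t # G) (Cons i ` a \<union> S') = snd (chf t a) @ cutRs (Suc i) G S'"
proof -
  have nS: "\<And>p. i # p \<notin> S'" using assms Reg_hd[of _ "Suc i" G] by (fastforce simp: CSF_def)
  have 1: "([i] \<in> Cons i ` a \<union> S') = ([] \<in> a)" using nS by auto
  have 2: "{p. i # p \<in> Cons i ` a \<union> S'} = a" using nS by auto
  have 3: "cutPs (Suc i) G (Cons i ` a \<union> S') = cutPs (Suc i) G S' \<and>
           cutRs (Suc i) G (Cons i ` a \<union> S') = cutRs (Suc i) G S'"
    by (rule cutPs_cong) auto
  show ?thesis using 1 2 3 by (simp add: chf_def)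
qed

lemma forest_main:
  assumes "\<forall>t \<in> set G. image_mset (chf t) (mset_set (Ch t)) = Dt t"
  shows "image_mset (\<lambda>S. (cutPs i G S, cutRs i G S)) (mset_set (CSF i G)) = Df G"
  using assms
proof (induction G arbitrary: i)
  case Nil
  have e: "CSF i [] = {{}}" by (auto simp: CSF_def antichain_def)
  show ?case unfolding e by simp
next
  case (Cons t G)
  let ?f = "\<lambda>(a,S'). Cons i ` a \<union> S'"
  let ?g = "\<lambda>S. (cutPs i (t # G) S, cutRs i (t # G) S)"
  let ?h = "\<lambda>S. (cutPs (Suc i) G S, cutRs (Suc i) G S)"
  have IH: "image_mset ?h (mset_set (CSF (Suc i) G)) = Df G"
    using Cons.IH[of "Suc i"] Cons.prems by simp
  have tt: "image_mset (chf t) (mset_set (Ch t)) = Dt t" using Cons.prems by simp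
  have "mset_set (CSF i (t # G)) = image_mset ?f (mset_set (Ch t \<times> CSF (Suc i) G))"
    unfolding CSF_Cons by (rule image_mset_mset_set[OF inj_CSF_Cons, symmetric])
  then have "image_mset ?g (mset_set (CSF i (t # G))) = image_mset (?g \<circ> ?f) (mset_set (Ch t \<times> CSF (Suc i) G))"
    by (simp only: multiset.map_comp)
  also have "\<dots> = bindm (mset_set (Ch t)) (\<lambda>a. image_mset (\<lambda>S'. (?g \<circ> ?f) (a, S')) (mset_set (CSF (Suc i) G)))"
    by (rule mset_set_times[OF finite_Ch finite_CSF])
  also have "\<dots> = bindm (mset_set (Ch t)) (\<lambda>a. image_mset (\<lambda>(c,d). (fst (chf t a) @ c, snd (chf t a) @ d)) (image_mset ?h (mset_set (CSF (Suc i) G))))"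
  proof (rule bindm_cong)
    fix a
    show "image_mset (\<lambda>S'. (?g \<circ> ?f) (a, S')) (mset_set (CSF (Suc i) G)) =
      image_mset (\<lambda>(c,d). (fst (chf t a) @ c, snd (chf t a) @ d)) (image_mset ?h (mset_set (CSF (Suc i) G)))"
      unfolding multiset.map_comp
    proof (rule image_mset_cong)
      fix S' assume "S' \<in># mset_set (CSF (Suc i) G)"
      then have "S' \<in> CSF (Suc i) G" using finite_CSF[of "Suc i" G] by simp
      from cutPs_Cons_split[OF this, of t a]
      show "(\<lambda>S'. (?g \<circ> ?f) (a, S')) S' = ((\<lambda>(c,d). (fst (chf t a) @ c, snd (chf t a) @ d)) \<circ> ?h) S'"
        by (simp del: cutPs.simps cutRs.simps)
    qed
  qed
  also have "\<dots> = bindm (mset_set (Ch t)) (\<lambda>a. image_mset (\<lambda>(c,d). (fst (chf t a) @ c, snd (chf t a) @ d)) (Df G))"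
    by (simp only: IH)
  also have "\<dots> = pprod (image_mset (chf t) (mset_set (Ch t))) (Df G)"
    unfolding pprod_def bindm_image by (simp add: case_prod_beta)
  also have "\<dots> = Df (t # G)" by (simp only: tt Df.simps)
  finally show ?case .
qed

lemma tree_main: "image_mset (chf t) (mset_set (Ch t)) = Dt t"
proof (induction t)
  case (Node d G)
  have IH: "image_mset (\<lambda>S. (cutPs 0 G S, cutRs 0 G S)) (mset_set (CSF 0 G)) = Df G"
    by (rule forest_main) (use Node in auto)
  have "image_mset (chf (Node d G)) (mset_set (Ch (Node d G)))
      = add_mset ([Node d G], []) (image_mset (chf (Node d G)) (mset_set (CSF 0 G)))"
    by (simp add: Ch_Node not_in_CSF finite_CSF chf_def)
  also have "image_mset (chf (Node d G)) (mset_set (CSF 0 G))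
      = image_mset (\<lambda>(P,R). (P, [Node d R])) (image_mset (\<lambda>S. (cutPs 0 G S, cutRs 0 G S)) (mset_set (CSF 0 G)))"
    unfolding multiset.map_comp
    apply (rule image_mset_cong)
    subgoal for x
      using Reg_hd[of "[]" 0 G] finite_CSF[of 0 G] by (auto simp: chf_def CSF_def)
    done
  finally show ?case using IH by simp
qed

definition kappa :: "nat list set \<Rightarrow> cut_choice" where
  "kappa a = (if [] \<in> a then TotalCut else if a = {} then EmptyCut else AdmCut a)"

lemma Ch_root: "a \<in> Ch t \<Longrightarrow> [] \<in> a \<Longrightarrow> a = {[]}"
proof -
  assume a: "a \<in> Ch t" "[] \<in> a"
  have "p = []" if "p \<in> a" for p
  proof -
    have "[] \<in> a \<and> [] @ p \<in> a" using a that by simp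
    then show ?thesis using a unfolding Ch_def antichain_def by blast
  qed
  then show "a = {[]}" using a by blast
qed

lemma root_verts: "[] \<in> verts t" by (simp add: verts_def)

lemma VC_eq: "{c. valid_cut t c} = kappa ` Ch t"
proof (intro set_eqI iffI)
  fix c assume "c \<in> {c. valid_cut t c}"
  then have vc: "valid_cut t c" by simp
  show "c \<in> kappa ` Ch t"
  proof (cases c)
    case EmptyCut
    have "{} \<in> Ch t" by (simp add: Ch_def antichain_def)
    moreover have "kappa {} = EmptyCut" by (simp add: kappa_def)
    ultimately show ?thesis using EmptyCut by (metis imageI)
  next
    case TotalCut
    have "{[]} \<in> Ch t" by (simp add: Ch_def antichain_def root_verts)
    moreover have "kappa {[]} = TotalCut" by (simp add: kappa_def)
    ultimately show ?thesis using TotalCut by (metis imageI)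
  next
    case (AdmCut S)
    then have adm: "admissible_cut t S" using vc by (simp add: valid_cut_def)
    then have "S \<in> Ch t" "[] \<notin> S" "S \<noteq> {}"
      unfolding admissible_cut_def Ch_def antichain_def by auto
    then have "kappa S = AdmCut S" "S \<in> Ch t" by (auto simp: kappa_def)
    then show ?thesis using AdmCut by (metis imageI)
  qed
next
  fix c assume "c \<in> kappa ` Ch t"
  then obtain a where a: "a \<in> Ch t" "c = kappa a" by blast
  show "c \<in> {c. valid_cut t c}"
  proof (cases "[] \<in> a \<or> a = {}")
    case True then show ?thesis using a by (auto simp: kappa_def valid_cut_def)
  next
    case False
    then have "admissible_cut t a" using a unfolding admissible_cut_def Ch_def antichain_def by auto
    then show ?thesis using a False by (simp add: kappa_def valid_cut_def)
  qed
qed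

lemma inj_kappa: "inj_on kappa (Ch t)"
proof (rule inj_onI)
  fix a b assume ab: "a \<in> Ch t" "b \<in> Ch t" "kappa a = kappa b"
  show "a = b"
  proof (cases "[] \<in> a")
    case True
    then have "kappa a = TotalCut" by (simp add: kappa_def)
    then have "[] \<in> b" using ab by (auto simp: kappa_def split: if_splits)
    then show ?thesis using Ch_root ab True by metis
  next
    case False
    then have nb: "[] \<notin> b" using ab by (auto simp: kappa_def split: if_splits)
    show ?thesis using ab False nb by (auto simp: kappa_def split: if_splits)
  qed
qed

lemma cutPR_kappa: "a \<in> Ch t \<Longrightarrow> cutPR t (kappa a) = chf t a"
  using cut_empty[of t] by (auto simp: kappa_def cutPR_def chf_def)

lemma finite_VC: "finite {c. valid_cut t c}"
  by (simp add: VC_eq finite_Ch)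

lemma tree_VC: "image_mset (cutPR t) (mset_set {c. valid_cut t c}) = Dt t"
proof -
  have "mset_set {c. valid_cut t c} = image_mset kappa (mset_set (Ch t))"
    unfolding VC_eq by (rule image_mset_mset_set[OF inj_kappa, symmetric])
  then have "image_mset (cutPR t) (mset_set {c. valid_cut t c}) = image_mset (cutPR t \<circ> kappa) (mset_set (Ch t))"
    by (simp only: multiset.map_comp)
  also have "\<dots> = image_mset (chf t) (mset_set (Ch t))"
    by (rule image_mset_cong) (use finite_Ch[of t] cutPR_kappa in auto)
  also have "\<dots> = Dt t" by (rule tree_main)
  finally show ?thesis .
qed

lemma cut_tuples_Nil: "cut_tuples [] = {[]}"
  by (auto simp: cut_tuples_def)

lemma cut_tuples_Cons: "cut_tuples (t # F) = (\<lambda>(c,cs). c # cs) ` ({c. valid_cut t c} \<times> cut_tuples F)"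
proof (intro set_eqI iffI)
  fix x assume "x \<in> cut_tuples (t # F)"
  then have x: "length x = Suc (length F)" "\<forall>i<Suc (length F). valid_cut ((t#F) ! i) (x ! i)"
    by (auto simp: cut_tuples_def)
  then obtain c cs where c: "x = c # cs" by (cases x) auto
  have "valid_cut t c" using x(2)[rule_format, of 0] c by simp
  moreover have "cs \<in> cut_tuples F"
    unfolding cut_tuples_def using x c by auto
  ultimately show "x \<in> (\<lambda>(c,cs). c # cs) ` ({c. valid_cut t c} \<times> cut_tuples F)"
    using c by auto
next
  fix x assume "x \<in> (\<lambda>(c,cs). c # cs) ` ({c. valid_cut t c} \<times> cut_tuples F)"
  then obtain c cs where c: "x = c # cs" "valid_cut t c" "cs \<in> cut_tuples F" by auto
  show "x \<in> cut_tuples (t # F)"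
    unfolding cut_tuples_def
  proof (intro CollectI conjI allI impI)
    show "length x = length (t # F)" using c by (simp add: cut_tuples_def)
    fix i assume "i < length (t # F)"
    then show "valid_cut ((t # F) ! i) (x ! i)"
      using c by (cases i) (auto simp: cut_tuples_def)
  qed
qed

lemma inj_Cons_pair: "inj_on (\<lambda>(c,cs). c # cs) X"
  by (auto simp: inj_on_def)

lemma finite_cut_tuples: "finite (cut_tuples F)"
  by (induction F) (auto simp: cut_tuples_Nil cut_tuples_Cons finite_VC)

lemma upt_Suc_Cons: "[0..<Suc n] = 0 # map Suc [0..<n]"
  by (simp add: map_Suc_upt upt_conv_Cons)

lemma Pc_Cons: "Pc (t # F) (c # cs) = fst (cutPR t c) @ Pc F cs"
  unfolding Pc_def length_Cons upt_Suc_Cons by (simp add: o_def)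

lemma Rc_Cons: "Rc (t # F) (c # cs) = snd (cutPR t c) @ Rc F cs"
  unfolding Rc_def length_Cons upt_Suc_Cons by (simp add: o_def)

lemma cuts_Df: "image_mset (\<lambda>cs. (Pc F cs, Rc F cs)) (mset_set (cut_tuples F)) = Df F"
proof (induction F)
  case Nil
  show ?case by (simp add: cut_tuples_Nil Pc_def Rc_def)
next
  case (Cons t F)
  let ?g = "\<lambda>cs. (Pc (t # F) cs, Rc (t # F) cs)"
  let ?h = "\<lambda>cs. (Pc F cs, Rc F cs)"
  have "mset_set (cut_tuples (t # F)) = image_mset (\<lambda>(c,cs). c # cs) (mset_set ({c. valid_cut t c} \<times> cut_tuples F))"
    unfolding cut_tuples_Cons by (rule image_mset_mset_set[OF inj_Cons_pair, symmetric])
  then have "image_mset ?g (mset_set (cut_tuples (t # F))) = image_mset (?g \<circ> (\<lambda>(c,cs). c # cs)) (mset_set ({c. valid_cut t c} \<times> cut_tuples F))"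
    by (simp only: multiset.map_comp)
  also have "\<dots> = bindm (mset_set {c. valid_cut t c}) (\<lambda>c. image_mset (\<lambda>cs. (?g \<circ> (\<lambda>(c,cs). c # cs)) (c, cs)) (mset_set (cut_tuples F)))"
    by (rule mset_set_times[OF finite_VC finite_cut_tuples])
  also have "\<dots> = bindm (mset_set {c. valid_cut t c}) (\<lambda>c. image_mset (\<lambda>(x,y). (fst (cutPR t c) @ x, snd (cutPR t c) @ y)) (image_mset ?h (mset_set (cut_tuples F))))"
    by (simp add: multiset.map_comp o_def Pc_Cons Rc_Cons)
  also have "\<dots> = bindm (mset_set {c. valid_cut t c}) (\<lambda>c. image_mset (\<lambda>(x,y). (fst (cutPR t c) @ x, snd (cutPR t c) @ y)) (Df F))"
    by (simp only: Cons.IH)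
  also have "\<dots> = pprod (image_mset (cutPR t) (mset_set {c. valid_cut t c})) (Df F)"
    unfolding pprod_def bindm_image by (simp add: case_prod_beta)
  also have "\<dots> = Df (t # F)" by (simp only: tree_VC Df.simps)
  finally show ?case .
qed

lemma count_image_mset_set:
  assumes "finite X"
  shows "count (image_mset g (mset_set X)) y = card {x \<in> X. g x = y}"
  using assms
proof (induction X rule: finite_induct)
  case empty then show ?case by simp
next
  case (insert x X)
  have "{z \<in> insert x X. g z = y} = (if g x = y then insert x {z \<in> X. g z = y} else {z \<in> X. g z = y})"
    by auto
  then show ?case using insert by auto
qed

lemma coprod_coeff_Df: "coprod_coeff F A B = count (Df F) (A, B)"
proof -
  have "coprod_coeff F A B = card {cs \<in> cut_tuples F. (Pc F cs, Rc F cs) = (A, B)}"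
    by (simp add: coprod_coeff_def)
  also have "\<dots> = count (image_mset (\<lambda>cs. (Pc F cs, Rc F cs)) (mset_set (cut_tuples F))) (A, B)"
    by (rule count_image_mset_set[OF finite_cut_tuples, symmetric])
  finally show ?thesis by (simp only: cuts_Df)
qed


lemma pprod_unit_left[simp]: "pprod {#([],[])#} N = N"
  by (simp add: pprod_def case_prod_beta)

lemma pprod_unit_right[simp]: "pprod M {#([],[])#} = M"
  by (induction M) (auto simp: pprod_def)

lemma pprod_assoc: "pprod (pprod M N) K = pprod M (pprod N K)"
  unfolding pprod_def
  by (simp add: bindm_assoc bindm_image image_bindm case_prod_unfold multiset.map_comp o_def)

lemma pprod_single: "pprod {#(a,b)#} {#(c,d)#} = {#(a@c, b@d)#}"
  by (simp add: pprod_def)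

lemma Df_append: "Df (F @ G) = pprod (Df F) (Df G)"
  by (induction F) (auto simp: pprod_assoc)

lemma Df_single: "Df [t] = Dt t" by simp

lemma mem_pprod: "x \<in># pprod M N \<longleftrightarrow> (\<exists>P1 R1 P2 R2. (P1,R1) \<in># M \<and> (P2,R2) \<in># N \<and> x = (P1 @ P2, R1 @ R2))"
  unfolding pprod_def set_bindm by force

lemma mem_Dt: "x \<in># Dt (Node d G) \<longleftrightarrow> x = ([Node d G], []) \<or> (\<exists>P R. (P,R) \<in># Df G \<and> x = (P, [Node d R]))"
  by auto

definition fdec :: "'d pforest \<Rightarrow> 'd set" where
  "fdec F = (\<Union>t\<in>set F. set_ptree t)"

lemma fdec_simps[simp]: "fdec [] = {}" "fdec (t # F) = set_ptree t \<union> fdec F"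
  "fdec (F @ G) = fdec F \<union> fdec G"
  by (auto simp: fdec_def)

lemma fweight_simps[simp]: "fweight [] = 0" "fweight (t # F) = tsize t + fweight F"
  "fweight (F @ G) = fweight F + fweight G"
  by (auto simp: fweight_def)

lemma tsize_Node[simp]: "tsize (Node d G) = Suc (fweight G)" by (simp add: fweight_def)
lemma set_ptree_Node[simp]: "set_ptree (Node d G) = insert d (fdec G)" by (simp add: fdec_def)
declare tsize.simps[simp del] ptree.set[simp del]

lemma Df_props:
  fixes t :: "'d ptree" and F :: "'d ptree list"
  shows "(\<forall>P R. (P,R) \<in># Dt t \<longrightarrow> fweight P + fweight R = tsize t \<and> fdec P \<union> fdec R \<subseteq> set_ptree t
     \<and> length R \<le> 1)"
  "(\<forall>P R. (P,R) \<in># Df F \<longrightarrow> fweight P + fweight R = fweight F \<and> fdec P \<union> fdec R \<subseteq> fdec F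
     \<and> length R \<le> length F)"
proof (induction t and F rule: Dt_Df.induct)
  case (1 d G)
  show ?case
  proof (intro allI impI)
    fix P R assume "(P, R) \<in># Dt (Node d G)"
    then consider "P = [Node d G]" "R = []" | R' where "(P,R') \<in># Df G" "R = [Node d R']"
      by auto
    then show "fweight P + fweight R = tsize (Node d G) \<and> fdec P \<union> fdec R \<subseteq> set_ptree (Node d G) \<and> length R \<le> 1"
    proof cases
      case 1 then show ?thesis by simp
    next
      case 2
      then have "fweight P + fweight R' = fweight G" "fdec P \<union> fdec R' \<subseteq> fdec G"
        using \<open>\<forall>P R. _\<close> by blast+
      then show ?thesis using 2 by (auto simp: tsize_Node set_ptree_Node)
    qed
  qed
next
  case 2
  then show ?case by simp
next
  case (3 t G)
  show ?case
  proof (intro allI impI)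
    fix P R assume "(P, R) \<in># Df (t # G)"
    then obtain P1 R1 P2 R2 where "(P1,R1) \<in># Dt t" "(P2,R2) \<in># Df G" "P = P1 @ P2" "R = R1 @ R2"
      by (auto simp: mem_pprod)
    then show "fweight P + fweight R = fweight (t # G) \<and> fdec P \<union> fdec R \<subseteq> fdec (t # G) \<and> length R \<le> length (t # G)"
      using 3 by fastforce
  qed
qed

lemma Df_weight: "(P,R) \<in># Df F \<Longrightarrow> fweight P + fweight R = fweight F"
  using Df_props(2) by blast
lemma Df_dec: "(P,R) \<in># Df F \<Longrightarrow> fdec P \<union> fdec R \<subseteq> fdec F"
  using Df_props(2) by blast
lemma Df_len: "(P,R) \<in># Df F \<Longrightarrow> length R \<le> length F"
  using Df_props(2) by blast

lemma tsize_pos: "tsize t > 0" by (cases t) auto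

lemma fweight_zero: "fweight F = 0 \<longleftrightarrow> F = []"
  by (cases F) (auto simp: tsize_pos)

lemma filter_bindm: "filter_mset Q (bindm M f) = bindm M (\<lambda>x. filter_mset Q (f x))"
  by (induction M) auto

lemma bindm_if_empty: "bindm M (\<lambda>x. if Q x then f x else {#}) = bindm (filter_mset Q M) f"
  by (induction M) auto

lemma filter_pprod_R: "filter_mset (\<lambda>x. snd x = []) (pprod M N) =
    pprod (filter_mset (\<lambda>x. snd x = []) M) (filter_mset (\<lambda>x. snd x = []) N)"
proof -
  have "filter_mset (\<lambda>x. snd x = []) (pprod M N) =
    bindm M (\<lambda>(a,b). if b = [] then image_mset (\<lambda>(c,d). (a@c, b@d)) (filter_mset (\<lambda>x. snd x = []) N) else {#})"
    unfolding pprod_def filter_bindm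
    by (rule bindm_cong) (auto simp: filter_mset_image_mset o_def case_prod_unfold)
  also have "\<dots> = pprod (filter_mset (\<lambda>x. snd x = []) M) (filter_mset (\<lambda>x. snd x = []) N)"
    unfolding pprod_def by (subst bindm_if_empty[symmetric], rule bindm_cong) (auto simp: case_prod_unfold)
  finally show ?thesis .
qed

lemma filter_pprod_P: "filter_mset (\<lambda>x. fst x = []) (pprod M N) =
    pprod (filter_mset (\<lambda>x. fst x = []) M) (filter_mset (\<lambda>x. fst x = []) N)"
proof -
  have "filter_mset (\<lambda>x. fst x = []) (pprod M N) =
    bindm M (\<lambda>(a,b). if a = [] then image_mset (\<lambda>(c,d). (a@c, b@d)) (filter_mset (\<lambda>x. fst x = []) N) else {#})"
    unfolding pprod_def filter_bindm
    by (rule bindm_cong) (auto simp: filter_mset_image_mset o_def case_prod_unfold)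
  also have "\<dots> = pprod (filter_mset (\<lambda>x. fst x = []) M) (filter_mset (\<lambda>x. fst x = []) N)"
    unfolding pprod_def by (subst bindm_if_empty[symmetric], rule bindm_cong) (auto simp: case_prod_unfold)
  finally show ?thesis .
qed

lemma Df_filter_R:
  fixes t :: "'d ptree" and F :: "'d ptree list"
  shows "filter_mset (\<lambda>x. snd x = []) (Dt t) = {#([t],[])#}"
  "filter_mset (\<lambda>x. snd x = []) (Df F) = {#(F,[])#}"
proof (induction t and F rule: Dt_Df.induct)
  case (1 d G)
  then show ?case by (simp add: filter_mset_image_mset o_def case_prod_beta)
next
  case 2
  then show ?case by simp
next
  case (3 t G)
  then show ?case by (simp add: filter_pprod_R pprod_single)
qed

lemma Df_filter_P:
  fixes t :: "'d ptree" and F :: "'d ptree list"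
  shows "filter_mset (\<lambda>x. fst x = []) (Dt t) = {#([],[t])#}"
  "filter_mset (\<lambda>x. fst x = []) (Df F) = {#([],F)#}"
proof (induction t and F rule: Dt_Df.induct)
  case (1 d G)
  have "filter_mset (\<lambda>x. fst x = []) (image_mset (\<lambda>(P,R). (P, [Node d R])) (Df G))
      = image_mset (\<lambda>(P,R). (P, [Node d R])) (filter_mset (\<lambda>x. fst x = []) (Df G))"
    by (simp add: filter_mset_image_mset o_def case_prod_beta)
  then show ?case using 1 by simp
next
  case 2
  then show ?case by simp
next
  case (3 t G)
  then show ?case by (simp add: filter_pprod_P pprod_single)
qed

lemma count_Df_R: "count (Df F) (A, []) = (if A = F then 1 else 0)"
proof -
  have "count (Df F) (A, []) = count (filter_mset (\<lambda>x. snd x = []) (Df F)) (A, [])" by simp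
  then show ?thesis by (simp only: Df_filter_R) simp
qed

lemma count_Df_P: "count (Df F) ([], B) = (if B = F then 1 else 0)"
proof -
  have "count (Df F) ([], B) = count (filter_mset (\<lambda>x. fst x = []) (Df F)) ([], B)" by simp
  then show ?thesis by (simp only: Df_filter_P) simp
qed


lemma pprod_alt: "pprod M N = bindm M (\<lambda>x. image_mset (\<lambda>y. (fst x @ fst y, snd x @ snd y)) N)"
  unfolding pprod_def by (simp add: case_prod_unfold)

lemma bindm_single_id: "bindm M (\<lambda>x. {#x#}) = M"
  by (induction M) auto

definition tprod where
  "tprod M N = bindm M (\<lambda>x. image_mset (\<lambda>y. (fst x @ fst y, fst (snd x) @ fst (snd y), snd (snd x) @ snd (snd y))) N)"

definition LL :: "'d pforest \<Rightarrow> ('d pforest \<times> 'd pforest \<times> 'd pforest) multiset" where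
  "LL F = bindm (Df F) (\<lambda>x. image_mset (\<lambda>y. (fst y, snd y, snd x)) (Df (fst x)))"

definition RR :: "'d pforest \<Rightarrow> ('d pforest \<times> 'd pforest \<times> 'd pforest) multiset" where
  "RR F = bindm (Df F) (\<lambda>x. image_mset (\<lambda>y. (fst x, fst y, snd y)) (Df (snd x)))"

lemma LL_Cons: "LL (t # F) = tprod (LL [t]) (LL F)"
  unfolding LL_def tprod_def
  apply (simp add: pprod_alt bindm_assoc bindm_image image_bindm multiset.map_comp o_def Df_append bindm_single_id)
  apply (rule bindm_cong)
  apply (rule bindm_comm)
  done

lemma RR_Cons: "RR (t # F) = tprod (RR [t]) (RR F)"
  unfolding RR_def tprod_def
  apply (simp add: pprod_alt bindm_assoc bindm_image image_bindm multiset.map_comp o_def Df_append bindm_single_id)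
  apply (rule bindm_cong)
  apply (rule bindm_comm)
  done

lemma Dt_alt: "Dt (Node d G) = add_mset ([Node d G], []) (image_mset (\<lambda>x. (fst x, [Node d (snd x)])) (Df G))"
  by (simp add: case_prod_unfold)

lemma bindm_add_mset2: "bindm M (\<lambda>x. add_mset (f x) (g x)) = image_mset f M + bindm M g"
  by (induction M) auto

lemma LL_tree: "LL [Node d G] = add_mset ([Node d G],[],[]) (image_mset (\<lambda>x. (fst x,[Node d (snd x)],[])) (Df G))
   + image_mset (\<lambda>z. (fst z, fst (snd z), [Node d (snd (snd z))])) (LL G)"
  unfolding LL_def
  by (simp only: Df_single Dt_alt) (simp add: bindm_image image_bindm multiset.map_comp o_def bindm_single2 Dt_alt del: Dt.simps)

lemma RR_tree: "RR [Node d G] = add_mset ([Node d G],[],[]) (image_mset (\<lambda>x. (fst x,[Node d (snd x)],[])) (Df G))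
   + image_mset (\<lambda>z. (fst z, fst (snd z), [Node d (snd (snd z))])) (RR G)"
  unfolding RR_def
  by (simp only: Df_single Dt_alt) (simp add: bindm_image image_bindm multiset.map_comp o_def bindm_single2 bindm_plus2 bindm_add_mset2 Dt_alt del: Dt.simps)

lemma coassoc:
  fixes t :: "'d ptree" and F :: "'d ptree list"
  shows "LL [t] = RR [t]" "LL F = RR F"
proof (induction t and F rule: Dt_Df.induct)
  case (1 d G)
  then show ?case by (simp only: LL_tree RR_tree)
next
  case 2
  then show ?case by (simp add: LL_def RR_def)
next
  case (3 t G)
  show ?case by (subst LL_Cons, subst RR_Cons) (simp only: 3)
qed


fun catn :: "nat \<Rightarrow> nat" where
  "catn 0 = 1"
| "catn (Suc m) = (\<Sum>i\<le>m. catn i * catn (m - i))"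

definition ccf :: "nat \<Rightarrow> real" where
  "ccf m = fact (2 * m) / (fact (Suc m) * fact m)"

definition sgb :: "nat \<Rightarrow> real" where
  "sgb k = ((1/2) gchoose k) * (-4) ^ k"

lemma gchoose_Suc_rec: "(a::real) gchoose (Suc k) = (a - of_nat k) * (a gchoose k) / of_nat (Suc k)"
  using gbinomial_mult_1[of a k] by (simp add: field_simps)

lemma sgb_0: "sgb 0 = 1" by (simp add: sgb_def)

lemma sgb_Suc: "sgb (Suc m) = - 2 * ccf m"
proof (induction m)
  case 0
  then show ?case by (simp add: sgb_def ccf_def)
next
  case (Suc m)
  have "sgb (Suc (Suc m)) = sgb (Suc m) * ((1/2 - of_nat (Suc m)) * (-4) / of_nat (Suc (Suc m)))"
    unfolding sgb_def gchoose_Suc_rec[of "1/2" "Suc m"] by (simp add: field_simps)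
  also have "\<dots> = - 2 * ccf m * ((1/2 - of_nat (Suc m)) * (-4) / of_nat (Suc (Suc m)))"
    by (simp add: Suc)
  also have "\<dots> = - 2 * ccf (Suc m)"
  proof -
    define q where "q = (fact (2 * m) :: real) / (fact m * fact m)"
    have fm: "(fact m :: real) \<noteq> 0" by simp
    have f1: "fact (2 * Suc m) = (fact (2 * m) :: real) * (2 * m + 1) * (2 * m + 2)"
      by (simp add: algebra_simps)
    have f2: "fact (Suc (Suc m)) = (fact m :: real) * (m + 1) * (m + 2)"
      by (simp add: algebra_simps)
    have f3: "fact (Suc m) = (fact m :: real) * (m + 1)"
      by (simp add: algebra_simps)
    have c0: "ccf m = q / (real m + 1)"
      unfolding ccf_def q_def f3 using fm by (simp add: field_simps)
    have n1: "real m + 1 \<noteq> 0" "real m + 2 \<noteq> 0" by linarith+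
    have c2: "ccf (Suc m) = q * (2 * (2 * real m + 1)) / ((real m + 1) * (real m + 2))"
    proof -
      have d1: "(real m + 1) * (real m + 2) * (real m + 1) \<noteq> 0" "(real m + 1) * (real m + 2) \<noteq> 0"
        using n1 by simp_all
      have c1: "ccf (Suc m) = q * ((2 * real m + 1) * (2 * real m + 2)) / ((real m + 1) * (real m + 2) * (real m + 1))"
        unfolding ccf_def q_def f1 f2 f3 using fm by (simp add: field_simps)
      show ?thesis unfolding c1 by (simp only: frac_eq_eq[OF d1]) (simp add: algebra_simps)
    qed
    have e: "(1/2 - real (Suc m)) * (-4) = 2 * (2 * real m + 1)" by (simp add: algebra_simps)
    have "- 2 * ccf m * ((1/2 - of_nat (Suc m)) * (-4) / of_nat (Suc (Suc m)))
        = - 2 * (q / (real m + 1)) * (2 * (2 * real m + 1) / (real m + 2))"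
      unfolding c0 by (simp only: e) (simp add: add.commute)
    also have "\<dots> = - 2 * ccf (Suc m)" unfolding c2 using n1 by (simp add: field_simps) (simp add: minus_divide_left algebra_simps)
    finally show ?thesis .
  qed
  finally show ?case .
qed

lemma sgb_conv: "(\<Sum>k=0..N. sgb k * sgb (N - k)) = ((1::real) gchoose N) * (-4) ^ N"
proof -
  have "(\<Sum>k=0..N. sgb k * sgb (N - k)) = (\<Sum>k=0..N. ((1/2) gchoose k) * ((1/2) gchoose (N - k))) * (-4) ^ N"
    unfolding sgb_def sum_distrib_right
    by (rule sum.cong) (auto simp: power_add[symmetric])
  also have "\<dots> = ((1::real) gchoose N) * (-4) ^ N"
    using gbinomial_Vandermonde[of "1/2::real" "1/2" N] by simp
  finally show ?thesis .
qed

lemma ccf_rec: "ccf (Suc m) = (\<Sum>j\<le>m. ccf j * ccf (m - j))"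
proof -
  define f where "f k = sgb k * sgb (Suc (Suc m) - k)" for k
  have "((1::real) gchoose (Suc (Suc m))) = 0"
    using binomial_gbinomial[of 1 "Suc (Suc m)"] by simp
  then have z: "(\<Sum>k=0..Suc (Suc m). f k) = 0"
    using sgb_conv[of "Suc (Suc m)"] unfolding f_def by simp
  have s1: "(\<Sum>k=0..Suc (Suc m). f k) = f 0 + (\<Sum>k=0..Suc m. f (Suc k))"
    by (simp only: sum.atLeast0_atMost_Suc_shift o_def)
  have s2: "(\<Sum>k=0..Suc m. f (Suc k)) = (\<Sum>k=0..m. f (Suc k)) + f (Suc (Suc m))"
    by (rule sum.atLeast0_atMost_Suc)
  have s3: "(\<Sum>k=0..m. f (Suc k)) = (\<Sum>k=0..m. 4 * (ccf k * ccf (m - k)))"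
    by (rule sum.cong) (auto simp: f_def sgb_Suc Suc_diff_le)
  have e0: "f 0 = sgb (Suc (Suc m))" "f (Suc (Suc m)) = sgb (Suc (Suc m))"
    by (simp_all add: f_def sgb_0)
  have "0 = 2 * sgb (Suc (Suc m)) + 4 * (\<Sum>k=0..m. ccf k * ccf (m - k))"
    using z unfolding s1 s2 s3 e0 sum_distrib_left[symmetric] by simp
  then show ?thesis by (simp add: sgb_Suc atLeast0AtMost)
qed

lemma catn_ccf: "real (catn m) = ccf m"
proof (induction m rule: less_induct)
  case (less m)
  show ?case
  proof (cases m)
    case 0 then show ?thesis by (simp add: ccf_def)
  next
    case (Suc k)
    have "real (catn m) = (\<Sum>i\<le>k. real (catn i) * real (catn (k - i)))"
      using Suc by simp
    also have "\<dots> = (\<Sum>i\<le>k. ccf i * ccf (k - i))"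
      by (rule sum.cong) (use less Suc in auto)
    finally show ?thesis using Suc ccf_rec by simp
  qed
qed

lemma series_main:
  fixes D :: nat and p :: "nat \<Rightarrow> nat" and x :: real
  assumes D: "D > 0" and p0: "p 0 = 0" and pS: "\<And>k. p (Suc k) = D ^ Suc k * catn k"
    and x: "\<bar>x\<bar> < 1 / (4 * real D)"
  shows "(\<lambda>n. real (p n) * x ^ n) sums ((1 - sqrt (1 - 4 * real D * x)) / 2)"
proof -
  define z where "z = - 4 * real D * x"
  have "\<bar>x\<bar> * (4 * real D) < 1" using x D by (simp add: field_simps)
  moreover have "\<bar>z\<bar> = \<bar>x\<bar> * (4 * real D)" unfolding z_def by (simp add: abs_mult)
  ultimately have zl: "\<bar>z\<bar> < 1" by simp
  have "(\<lambda>n. ((1/2) gchoose n) * z ^ n) sums (1 + z) powr (1/2)"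
    by (rule gen_binomial_real[OF zl])
  moreover have "(1 + z) powr (1/2) = sqrt (1 - 4 * real D * x)"
    using zl by (subst powr_half_sqrt) (auto simp: z_def)
  moreover have "((1/2) gchoose n) * z ^ n = sgb n * (real D * x) ^ n" for n
  proof -
    have "z = (-4) * (real D * x)" by (simp add: z_def)
    then show ?thesis unfolding sgb_def by (simp only: power_mult_distrib mult.assoc)
  qed
  ultimately have s1: "(\<lambda>n. sgb n * (real D * x) ^ n) sums sqrt (1 - 4 * real D * x)" by simp
  have s0: "(\<lambda>n. if n = 0 then 1 else 0) sums (1::real)"
    using sums_single[of 0 "\<lambda>_. 1::real"] by simp
  have "(\<lambda>n. ((if n = 0 then 1 else 0) - sgb n * (real D * x) ^ n) / 2) sums ((1 - sqrt (1 - 4 * real D * x)) / 2)"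
    by (intro sums_divide sums_diff s0 s1)
  moreover have "((if n = 0 then 1 else 0) - sgb n * (real D * x) ^ n) / 2 = real (p n) * x ^ n" for n
  proof (cases n)
    case 0 then show ?thesis by (simp add: p0 sgb_0)
  next
    case (Suc k)
    then show ?thesis by (simp add: pS sgb_Suc catn_ccf[symmetric] power_mult_distrib)
  qed
  ultimately show ?thesis by simp
qed


definition FS :: "'d set \<Rightarrow> nat \<Rightarrow> 'd pforest set" where
  "FS D m = {F. fweight F = m \<and> fdec F \<subseteq> D}"

lemma FS_0: "FS D 0 = {[]}"
  by (auto simp: FS_def fweight_zero)

lemma FS_Suc: "FS D (Suc m) = (\<lambda>(d,(G,K)). Node d G # K) ` (\<Union>i\<le>m. D \<times> (FS D i \<times> FS D (m - i)))"
proof (intro set_eqI iffI)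
  fix F assume "F \<in> FS D (Suc m)"
  then have F: "fweight F = Suc m" "fdec F \<subseteq> D" by (auto simp: FS_def)
  then have "F \<noteq> []" by auto
  then obtain t K where tK: "F = t # K" by (meson neq_Nil_conv)
  obtain d G where t: "t = Node d G" by (cases t)
  have w: "fweight G + fweight K = m" using F tK t by simp
  have dG: "d \<in> D" "fdec G \<subseteq> D" "fdec K \<subseteq> D" using F tK t by auto
  have mem: "(d,(G,K)) \<in> D \<times> (FS D (fweight G) \<times> FS D (m - fweight G))"
    using w dG unfolding FS_def by simp
  have le: "fweight G \<in> {..m}" using w by simp
  have "(d,(G,K)) \<in> (\<Union>i\<le>m. D \<times> (FS D i \<times> FS D (m - i)))"
    using le mem by blast
  moreover have "F = (\<lambda>(d,(G,K)). Node d G # K) (d,(G,K))" using tK t by simp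
  ultimately show "F \<in> (\<lambda>(d,(G,K)). Node d G # K) ` (\<Union>i\<le>m. D \<times> (FS D i \<times> FS D (m - i)))"
    by (rule rev_image_eqI)
next
  fix F assume "F \<in> (\<lambda>(d,(G,K)). Node d G # K) ` (\<Union>i\<le>m. D \<times> (FS D i \<times> FS D (m - i)))"
  then obtain i d G K where "i \<le> m" "d \<in> D" "G \<in> FS D i" "K \<in> FS D (m - i)" "F = Node d G # K"
    by auto
  then show "F \<in> FS D (Suc m)" by (auto simp: FS_def)
qed

lemma finite_FS: "finite D \<Longrightarrow> finite (FS D m)"
proof (induction m rule: less_induct)
  case (less m)
  show ?case
  proof (cases m)
    case 0 then show ?thesis by (simp add: FS_0)
  next
    case (Suc k)
    have "finite (\<Union>i\<le>k. D \<times> (FS D i \<times> FS D (k - i)))"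
      using less Suc by auto
    then show ?thesis using Suc by (simp add: FS_Suc)
  qed
qed

lemma card_FS_Suc:
  assumes "finite D"
  shows "card (FS D (Suc m)) = (\<Sum>i\<le>m. card D * (card (FS D i) * card (FS D (m - i))))"
proof -
  have inj: "inj_on (\<lambda>(d,(G,K)). Node d G # K) (\<Union>i\<le>m. D \<times> (FS D i \<times> FS D (m - i)))"
    by (auto simp: inj_on_def)
  have "card (FS D (Suc m)) = card (\<Union>i\<le>m. D \<times> (FS D i \<times> FS D (m - i)))"
    unfolding FS_Suc by (rule card_image[OF inj])
  also have "\<dots> = (\<Sum>i\<le>m. card (D \<times> (FS D i \<times> FS D (m - i))))"
  proof (rule card_UN_disjoint)
    show "finite {..m}" by simp
    show "\<forall>i\<in>{..m}. finite (D \<times> (FS D i \<times> FS D (m - i)))"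
      using assms finite_FS by blast
    show "\<forall>i\<in>{..m}. \<forall>j\<in>{..m}. i \<noteq> j \<longrightarrow> D \<times> (FS D i \<times> FS D (m - i)) \<inter> D \<times> (FS D j \<times> FS D (m - j)) = {}"
      by (auto simp: FS_def)
  qed
  also have "\<dots> = (\<Sum>i\<le>m. card D * (card (FS D i) * card (FS D (m - i))))"
    by (simp add: card_cartesian_product)
  finally show ?thesis .
qed

lemma card_FS: "finite D \<Longrightarrow> card (FS D m) = card D ^ m * catn m"
proof (induction m rule: less_induct)
  case (less m)
  show ?case
  proof (cases m)
    case 0 then show ?thesis by (simp add: FS_0)
  next
    case (Suc k)
    have "card (FS D m) = (\<Sum>i\<le>k. card D * (card (FS D i) * card (FS D (k - i))))"
      using Suc card_FS_Suc less.prems by simp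
    also have "\<dots> = (\<Sum>i\<le>k. card D ^ Suc k * (catn i * catn (k - i)))"
    proof (rule sum.cong)
      fix i assume i: "i \<in> {..k}"
      then have "card (FS D i) = card D ^ i * catn i" "card (FS D (k - i)) = card D ^ (k - i) * catn (k - i)"
        using less Suc by auto
      moreover have "card D ^ i * card D ^ (k - i) = card D ^ k"
        using i by (simp add: power_add[symmetric])
      ultimately show "card D * (card (FS D i) * card (FS D (k - i))) = card D ^ Suc k * (catn i * catn (k - i))"
        by (simp add: algebra_simps)
    qed simp
    also have "\<dots> = card D ^ m * catn m"
      using Suc by (simp add: sum_distrib_left)
    finally show ?thesis .
  qed
qed

definition EF :: "'d set \<Rightarrow> nat \<Rightarrow> 'd pforest set" where
  "EF D n = {F \<in> FS D n. \<exists>K d. F = K @ [Node d []]}"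

lemma EF_Suc: "EF D (Suc m) = (\<lambda>(K,d). K @ [Node d []]) ` (FS D m \<times> D)"
  by (auto simp: EF_def FS_def)

lemma card_EF: "finite D \<Longrightarrow> card (EF D (Suc m)) = card D ^ Suc m * catn m"
proof -
  assume D: "finite D"
  have "inj_on (\<lambda>(K,d). K @ [Node d []]) (FS D m \<times> D)" by (auto simp: inj_on_def)
  then have "card (EF D (Suc m)) = card (FS D m \<times> D)" unfolding EF_Suc by (rule card_image)
  then show ?thesis using D by (simp add: card_cartesian_product card_FS)
qed

lemma tau_eq: "tau (Suc m) = catn m"
proof -
  have eq: "{t :: unit ptree. tsize t = Suc m} = (\<lambda>G. Node () G) ` FS UNIV m"
  proof (intro set_eqI iffI)
    fix t :: "unit ptree" assume t: "t \<in> {t. tsize t = Suc m}"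
    obtain u G where tG: "t = Node u G" by (cases t)
    then have "t = Node () G" by simp
    moreover have "G \<in> FS UNIV m" using t tG by (simp add: FS_def)
    ultimately show "t \<in> (\<lambda>G. Node () G) ` FS UNIV m" by blast
  next
    fix t :: "unit ptree" assume "t \<in> (\<lambda>G. Node () G) ` FS UNIV m"
    then obtain G where "t = Node () G" "G \<in> FS UNIV m" by blast
    then show "t \<in> {t. tsize t = Suc m}" by (simp add: FS_def)
  qed
  have inj: "inj_on (\<lambda>G. Node () G) (FS UNIV m)" by (auto simp: inj_on_def)
  have "tau (Suc m) = card (FS (UNIV :: unit set) m)"
    unfolding tau_def eq by (rule card_image[OF inj])
  moreover have "card (FS (UNIV :: unit set) m) = card (UNIV :: unit set) ^ m * catn m"
    by (rule card_FS) simp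
  moreover have "card (UNIV :: unit set) = 1" by simp
  ultimately show ?thesis by (simp only: power_one mult_1)
qed


lemma mem_count_pos: "x \<in># M \<longleftrightarrow> count M x > 0" by simp

lemma Df_self_P: "([], F) \<in># Df F"
  using count_Df_P[of F F] by (simp only: mem_count_pos) simp

lemma Df_self_R: "(F, []) \<in># Df F"
  using count_Df_R[of F F] by (simp only: mem_count_pos) simp

lemma Df_R_nil: "(P, []) \<in># Df F \<Longrightarrow> P = F"
  using count_Df_R[of F P] by (simp only: mem_count_pos) (simp split: if_splits)

lemma Df_P_nil: "([], R) \<in># Df F \<Longrightarrow> R = F"
  using count_Df_P[of F R] by (simp only: mem_count_pos) (simp split: if_splits)

lemma lead_mem: "(C, K @ [Node d []]) \<in># Df (K @ [Node d C])"
proof -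
  have "(C, [Node d []]) \<in># Dt (Node d C)"
    using Df_self_R[of C] by (auto simp: mem_Dt)
  then show ?thesis
    unfolding Df_append Df_single mem_pprod using Df_self_P[of K] by fastforce
qed

definition lastw :: "'d pforest \<Rightarrow> nat" where
  "lastw Y = (if Y = [] then 0 else tsize (last Y))"

lemma Dt_len: "(P, R) \<in># Dt t \<Longrightarrow> length R \<le> 1"
  using Df_props(1) by blast

lemma lead_key:
  assumes mem: "(C, K @ [Node d []]) \<in># Df Y" and ne: "Y \<noteq> K @ [Node d C]"
  shows "length Y > Suc (length K) \<or> (length Y = Suc (length K) \<and> lastw Y < Suc (fweight C))"
proof -
  have "length (K @ [Node d []]) \<le> length Y" using Df_len[OF mem] .
  then have ge: "Suc (length K) \<le> length Y" by simp
  show ?thesis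
  proof (cases "length Y = Suc (length K)")
    case False then show ?thesis using ge by simp
  next
    case True
    then have "Y \<noteq> []" by auto
    then obtain Y' y where Yy: "Y = Y' @ [y]" by (metis rev_exhaust)
    have lY': "length Y' = length K" using True Yy by simp
    from mem obtain P1 R1 P2 R2 where m1: "(P1,R1) \<in># Df Y'" and m2: "(P2,R2) \<in># Dt y"
      and eqP: "C = P1 @ P2" and eqR: "K @ [Node d []] = R1 @ R2"
      unfolding Yy Df_append Df_single mem_pprod by blast
    have l1: "length R1 \<le> length K" using Df_len[OF m1] lY' by simp
    have l2: "length R2 \<le> 1" using Dt_len[OF m2] .
    have "length R1 + length R2 = Suc (length K)" using arg_cong[OF eqR, of length] by simp
    then have l1': "length R1 = length K" using l1 l2 by linarith
    then have R1: "R1 = K" and R2: "R2 = [Node d []]" using eqR by (auto simp: append_eq_append_conv)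
    obtain e G where y: "y = Node e G" by (cases y)
    from m2 obtain R' where "(P2, R') \<in># Df G" "[Node e R'] = [Node d []]"
      unfolding y R2 by (auto simp: mem_Dt)
    then have P2: "P2 = G" and e: "e = d" using Df_R_nil by auto
    have lw: "lastw Y = Suc (fweight P2)" using Yy y P2 by (simp add: lastw_def)
    show ?thesis
    proof (cases "P1 = []")
      case True
      then have "K = Y'" using m1 R1 Df_P_nil by blast
      then have "Y = K @ [Node d C]" using Yy y P2 e eqP True by simp
      then show ?thesis using ne by simp
    next
      case False
      then have "fweight P1 > 0" using fweight_zero by blast
      then have "lastw Y < Suc (fweight C)" using lw eqP by simp
      then show ?thesis using True by simp
    qed
  qed
qed

definition mu :: "'d pforest \<Rightarrow> nat" where
  "mu Y = (fweight Y - length Y) * (fweight Y + 1) + lastw Y"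

lemma length_le_fweight: "length F \<le> fweight F"
proof (induction F)
  case (Cons t F) then show ?case using tsize_pos[of t] by simp
qed simp

lemma lastw_le_fweight: "lastw F \<le> fweight F"
proof (cases F rule: rev_cases)
  case (snoc G t) then show ?thesis by (simp add: lastw_def)
qed (simp add: lastw_def)

lemma mu_less:
  assumes w: "fweight Y = fweight F"
    and k: "length Y > length F \<or> (length Y = length F \<and> lastw Y < lastw F)"
  shows "mu Y < mu F"
proof -
  define w0 where "w0 = fweight F"
  have lY: "length Y \<le> w0" "lastw Y \<le> w0" using length_le_fweight[of Y] lastw_le_fweight[of Y] w w0_def by simp_all
  show ?thesis
  proof (cases "length Y > length F")
    case True
    define a where "a = w0 - length Y"
    define b where "b = w0 - length F"
    have ab: "a + 1 \<le> b" using True lY unfolding a_def b_def by simp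
    have "(a + 1) * (w0 + 1) \<le> b * (w0 + 1)" using ab by (rule mult_right_mono) simp
    moreover have "mu Y \<le> a * (w0 + 1) + w0" unfolding mu_def a_def using w w0_def lY by simp
    moreover have "b * (w0 + 1) \<le> mu F" unfolding mu_def b_def w0_def by simp
    ultimately show ?thesis by (simp add: algebra_simps)
  next
    case False
    then have "length Y = length F" "lastw Y < lastw F" using k by auto
    then show ?thesis unfolding mu_def using w by simp
  qed
qed

lemma lead_mu:
  assumes mem: "(C, K @ [Node d []]) \<in># Df Y" and ne: "Y \<noteq> K @ [Node d C]"
  shows "mu Y < mu (K @ [Node d C])"
proof (rule mu_less)
  show "fweight Y = fweight (K @ [Node d C])"
    using Df_weight[OF mem] by simp
  show "length Y > length (K @ [Node d C]) \<or> (length Y = length (K @ [Node d C]) \<and> lastw Y < lastw (K @ [Node d C]))"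
    using lead_key[OF mem ne] by (simp add: lastw_def)
qed


definition PhiW :: "'d pforest set \<Rightarrow> ('d pforest \<Rightarrow> rat) \<Rightarrow> 'd pforest \<Rightarrow> 'd pforest \<Rightarrow> rat" where
  "PhiW W x A B = (\<Sum>G\<in>W. x G * of_nat (count (Df G) (A, B)))"

lemma count_nz_props:
  assumes "count (Df G) (A, B) \<noteq> 0"
  shows "fweight A + fweight B = fweight G" "fdec A \<union> fdec B \<subseteq> fdec G"
proof -
  have m: "(A, B) \<in># Df G" using assms by simp
  show "fweight A + fweight B = fweight G" using Df_weight[OF m] .
  show "fdec A \<union> fdec B \<subseteq> fdec G" using Df_dec[OF m] .
qed

lemma phi_outside:
  assumes "K @ [Node d C] \<notin> FS Dset n"
  shows "PhiW (FS Dset n) x C (K @ [Node d []]) = 0"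
  unfolding PhiW_def
proof (rule sum.neutral, rule ballI)
  fix G assume G: "G \<in> FS Dset n"
  have "count (Df G) (C, K @ [Node d []]) = 0"
  proof (rule ccontr)
    assume nz: "count (Df G) (C, K @ [Node d []]) \<noteq> 0"
    from count_nz_props[OF nz] G have "K @ [Node d C] \<in> FS Dset n"
      by (auto simp: FS_def)
    then show False using assms by simp
  qed
  then show "x G * of_nat (count (Df G) (C, K @ [Node d []])) = 0" by simp
qed

definition FSle :: "'d set \<Rightarrow> nat \<Rightarrow> 'd pforest set" where
  "FSle Dset n = {F. fweight F \<le> n \<and> fdec F \<subseteq> Dset}"

lemma FSle_eq: "FSle Dset n = (\<Union>m\<le>n. FS Dset m)"
  by (auto simp: FSle_def FS_def)

lemma finite_FSle: "finite Dset \<Longrightarrow> finite (FSle Dset n)"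
  by (simp add: FSle_eq finite_FS)

lemma phi_outside_B:
  assumes "B \<notin> FSle Dset n"
  shows "PhiW (FS Dset n) x A B = 0"
  unfolding PhiW_def
proof (rule sum.neutral, rule ballI)
  fix G assume G: "G \<in> FS Dset n"
  have "count (Df G) (A, B) = 0"
  proof (rule ccontr)
    assume nz: "count (Df G) (A, B) \<noteq> 0"
    from count_nz_props[OF nz] G have "B \<in> FSle Dset n"
      by (auto simp: FS_def FSle_def)
    then show False using assms by simp
  qed
  then show "x G * of_nat (count (Df G) (A, B)) = 0" by simp
qed

lemma forest_shape:
  assumes "F \<noteq> []"
  obtains K d where "F = K @ [Node d []]" | K d C where "C \<noteq> []" "F = K @ [Node d C]"
proof -
  obtain K t where "F = K @ [t]" using assms by (metis rev_exhaust)
  moreover obtain d C where "t = Node d C" by (cases t)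
  ultimately show ?thesis using that by (cases "C = []") auto
qed

lemma not_EF: "C \<noteq> [] \<Longrightarrow> K @ [Node d C] \<notin> EF Dset n"
  by (auto simp: EF_def)

lemma EF_sub: "EF Dset n \<subseteq> FS Dset n" by (auto simp: EF_def)

lemma sum_single_nz:
  assumes "finite A" "a \<in> A" "\<And>x. x \<in> A \<Longrightarrow> x \<noteq> a \<Longrightarrow> g x = 0"
  shows "sum g A = g a"
proof -
  have "sum g A = g a + sum g (A - {a})" using sum.remove[OF assms(1,2)] .
  moreover have "sum g (A - {a}) = 0" using assms(3) by (intro sum.neutral) auto
  ultimately show ?thesis by simp
qed

lemma inj_rows:
  fixes x :: "'d pforest \<Rightarrow> rat"
  assumes D: "finite Dset" and n: "n \<ge> 1"
    and supp: "\<And>G. x G \<noteq> 0 \<Longrightarrow> G \<in> FS Dset n"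
    and rows: "\<And>K d C. C \<noteq> [] \<Longrightarrow> PhiW (FS Dset n) x C (K @ [Node d []]) = 0"
    and E0: "\<And>e. e \<in> EF Dset n \<Longrightarrow> x e = 0"
  shows "x G = 0"
proof (rule ccontr)
  assume "x G \<noteq> 0"
  then obtain F where F: "x F \<noteq> 0" and minF: "\<And>F'. x F' \<noteq> 0 \<Longrightarrow> mu F \<le> mu F'"
    using ex_has_least_nat[of "\<lambda>F. x F \<noteq> 0" G mu] by blast
  have FW: "F \<in> FS Dset n" using supp F .
  then have "F \<noteq> []" using n by (auto simp: FS_def)
  then obtain K d C where C: "C \<noteq> []" and FK: "F = K @ [Node d C]"
  proof (cases rule: forest_shape)
    case (1 K d)
    then have "F \<in> EF Dset n" using FW by (auto simp: EF_def)
    then show ?thesis using E0 F by blast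
  qed
  have "PhiW (FS Dset n) x C (K @ [Node d []]) = x F * of_nat (count (Df F) (C, K @ [Node d []]))"
    unfolding PhiW_def
  proof (rule sum_single_nz[OF finite_FS[OF D] FW])
    fix G assume G: "G \<in> FS Dset n" "G \<noteq> F"
    show "x G * of_nat (count (Df G) (C, K @ [Node d []])) = 0"
    proof (cases "x G = 0 \<or> count (Df G) (C, K @ [Node d []]) = 0")
      case False
      then have m: "(C, K @ [Node d []]) \<in># Df G" and xG: "x G \<noteq> 0" by auto
      have "G \<noteq> K @ [Node d C]" using G(2) FK by simp
      from lead_mu[OF m this] have "mu G < mu F" using FK by simp
      moreover have "mu F \<le> mu G" using minF[OF xG] .
      ultimately show ?thesis by simp
    qed auto
  qed
  moreover have "count (Df F) (C, K @ [Node d []]) \<noteq> 0" using lead_mem FK by simp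
  ultimately have "PhiW (FS Dset n) x C (K @ [Node d []]) \<noteq> 0" using F by simp
  then show False using rows C by blast
qed

definition rK :: "'d pforest \<Rightarrow> 'd pforest" where "rK F = butlast F"
definition rd :: "'d pforest \<Rightarrow> 'd" where "rd F = (case last F of Node d _ \<Rightarrow> d)"
definition rC :: "'d pforest \<Rightarrow> 'd pforest" where "rC F = (case last F of Node _ C \<Rightarrow> C)"

lemma r_simps[simp]: "rK (K @ [Node d C]) = K" "rd (K @ [Node d C]) = d" "rC (K @ [Node d C]) = C"
  by (simp_all add: rK_def rd_def rC_def)

definition rowv :: "'d set \<Rightarrow> nat \<Rightarrow> ('d pforest \<Rightarrow> rat) \<Rightarrow> 'd pforest \<Rightarrow> rat" where
  "rowv Dset n x F = PhiW (FS Dset n) x (rC F) (rK F @ [Node (rd F) []])"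

definition cF :: "'d pforest \<Rightarrow> rat" where
  "cF F = of_nat (count (Df F) (rC F, rK F @ [Node (rd F) []]))"

lemma N_shape:
  assumes "F \<in> FS Dset n - EF Dset n" "n \<ge> 1"
  shows "rC F \<noteq> [] \<and> F = rK F @ [Node (rd F) (rC F)]"
proof -
  have "F \<noteq> []" using assms by (auto simp: FS_def)
  then show ?thesis
  proof (cases rule: forest_shape)
    case (1 K d)
    then have "F \<in> EF Dset n" using assms by (auto simp: EF_def)
    then show ?thesis using assms by simp
  next
    case (2 K d C) then show ?thesis by simp
  qed
qed

lemma cF_nz: "F \<in> FS Dset n - EF Dset n \<Longrightarrow> n \<ge> 1 \<Longrightarrow> cF F \<noteq> 0"
proof -
  assume "F \<in> FS Dset n - EF Dset n" "n \<ge> 1"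
  then have s: "rK F @ [Node (rd F) (rC F)] = F" using N_shape by metis
  have m: "(rC F, rK F @ [Node (rd F) []]) \<in># Df (rK F @ [Node (rd F) (rC F)])" by (rule lead_mem)
  then have "(rC F, rK F @ [Node (rd F) []]) \<in># Df F" by (simp only: s)
  then show "cF F \<noteq> 0" unfolding cF_def by simp
qed

lemma exist_rows:
  fixes y :: "'d pforest \<Rightarrow> rat"
  assumes D: "finite Dset" and n: "n \<ge> 1"
  shows "\<exists>x. (\<forall>G. x G \<noteq> 0 \<longrightarrow> G \<in> FS Dset n) \<and> (\<forall>e\<in>EF Dset n. x e = y e)
      \<and> (\<forall>K d C. C \<noteq> [] \<longrightarrow> PhiW (FS Dset n) x C (K @ [Node d []]) = 0)"
proof -
  let ?W = "FS Dset n"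
  let ?N = "FS Dset n - EF Dset n"
  have fW: "finite ?W" using finite_FS[OF D] .
  have step: "\<exists>x. (\<forall>G. x G \<noteq> 0 \<longrightarrow> G \<in> ?W) \<and> (\<forall>e\<in>EF Dset n. x e = y e)
      \<and> (\<forall>F\<in>?N. mu F < m \<longrightarrow> rowv Dset n x F = 0)" for m
  proof (induction m)
    case 0
    show ?case
      by (rule exI[of _ "\<lambda>G. if G \<in> EF Dset n then y G else 0"]) (use EF_sub in auto)
  next
    case (Suc m)
    then obtain x where x1: "\<forall>G. x G \<noteq> 0 \<longrightarrow> G \<in> ?W" and x2: "\<forall>e\<in>EF Dset n. x e = y e"
      and x3: "\<forall>F\<in>?N. mu F < m \<longrightarrow> rowv Dset n x F = 0" by blast
    define dl where "dl G = (if G \<in> ?N \<and> mu G = m then rowv Dset n x G / cF G else 0)" for G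
    define x' where "x' G = x G - dl G" for G
    have "\<forall>G. x' G \<noteq> 0 \<longrightarrow> G \<in> ?W" using x1 unfolding x'_def dl_def by auto
    moreover have "\<forall>e\<in>EF Dset n. x' e = y e" using x2 unfolding x'_def dl_def by auto
    moreover have "\<forall>F\<in>?N. mu F < Suc m \<longrightarrow> rowv Dset n x' F = 0"
    proof (intro ballI impI)
      fix F assume FN: "F \<in> ?N" and mF: "mu F < Suc m"
      have shape: "rC F \<noteq> []" "F = rK F @ [Node (rd F) (rC F)]" using N_shape[OF FN n] by auto
      let ?c = "\<lambda>G. of_nat (count (Df G) (rC F, rK F @ [Node (rd F) []])) :: rat"
      have r': "rowv Dset n x' F = rowv Dset n x F - (\<Sum>G\<in>?W. dl G * ?c G)"
        unfolding rowv_def PhiW_def x'_def by (simp add: algebra_simps sum_subtractf)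
      have dsum: "(\<Sum>G\<in>?W. dl G * ?c G) = dl F * ?c F"
      proof (rule sum_single_nz[OF fW])
        show "F \<in> ?W" using FN by simp
        fix G assume G: "G \<in> ?W" "G \<noteq> F"
        show "dl G * ?c G = 0"
        proof (cases "dl G = 0 \<or> ?c G = 0")
          case False
          then have "mu G = m" "(rC F, rK F @ [Node (rd F) []]) \<in># Df G"
            unfolding dl_def by (auto split: if_splits)
          moreover have "mu G < mu (rK F @ [Node (rd F) (rC F)])"
          proof (rule lead_mu)
            show "(rC F, rK F @ [Node (rd F) []]) \<in># Df G" using calculation(2) .
            show "G \<noteq> rK F @ [Node (rd F) (rC F)]" using G(2) shape(2) by metis
          qed
          moreover have "mu (rK F @ [Node (rd F) (rC F)]) = mu F" using shape(2) by metis
          ultimately show ?thesis using mF by simp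
        qed auto
      qed
      show "rowv Dset n x' F = 0"
      proof (cases "mu F = m")
        case True
        have "dl F * ?c F = rowv Dset n x F"
          using cF_nz[OF FN n] True FN unfolding dl_def cF_def by simp
        then show ?thesis using r' dsum by simp
      next
        case False
        then have "dl F = 0" unfolding dl_def by simp
        moreover have "rowv Dset n x F = 0" using x3 FN mF False by simp
        ultimately show ?thesis using r' dsum by simp
      qed
    qed
    ultimately show ?case by blast
  qed
  obtain x where x1: "\<forall>G. x G \<noteq> 0 \<longrightarrow> G \<in> ?W" and x2: "\<forall>e\<in>EF Dset n. x e = y e"
      and x3: "\<forall>F\<in>?N. mu F < Suc (sum mu ?W) \<longrightarrow> rowv Dset n x F = 0"
    using step[of "Suc (sum mu ?W)"] by blast
  have x3': "rowv Dset n x F = 0" if "F \<in> ?N" for F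
  proof -
    have "mu F \<le> sum mu ?W" using that fW by (intro member_le_sum) auto
    then show ?thesis using x3 that by simp
  qed
  have "PhiW ?W x C (K @ [Node d []]) = 0" if C: "C \<noteq> []" for K d C
  proof (cases "K @ [Node d C] \<in> ?W")
    case True
    then have "K @ [Node d C] \<in> ?N" using not_EF[OF C] by simp
    from x3'[OF this] show ?thesis by (simp add: rowv_def)
  next
    case False then show ?thesis by (rule phi_outside)
  qed
  then show ?thesis using x1 x2 by blast
qed


lemma count_image_triple:
  "count (image_mset (\<lambda>y. (fst y, snd y, c0)) N) (a, b, c) = (if c0 = c then count N (a, b) else 0)"
proof -
  have "count (image_mset (\<lambda>y. (fst y, snd y, c0)) N) (a, b, c) =
      (\<Sum>y\<in>(\<lambda>y. (fst y, snd y, c0)) -` {(a, b, c)} \<inter> set_mset N. count N y)"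
    by (rule count_image_mset)
  moreover have "(\<lambda>y. (fst y, snd y, c0)) -` {(a, b, c)} = (if c0 = c then {(a, b)} else {})"
    by auto
  ultimately show ?thesis by (cases "(a, b) \<in># N") (auto simp: Int_insert_left not_in_iff)
qed

lemma count_image_triple2:
  "count (image_mset (\<lambda>y. (a0, fst y, snd y)) N) (a, b, c) = (if a0 = a then count N (b, c) else 0)"
proof -
  have "count (image_mset (\<lambda>y. (a0, fst y, snd y)) N) (a, b, c) =
      (\<Sum>y\<in>(\<lambda>y. (a0, fst y, snd y)) -` {(a, b, c)} \<inter> set_mset N. count N y)"
    by (rule count_image_mset)
  moreover have "(\<lambda>y. (a0, fst y, snd y)) -` {(a, b, c)} = (if a0 = a then {(b, c)} else {})"
    by auto
  ultimately show ?thesis by (cases "(b, c) \<in># N") (auto simp: Int_insert_left not_in_iff)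
qed

lemma sum_mset_fst:
  fixes g :: "'a \<Rightarrow> nat"
  assumes "finite T" "fst ` set_mset M \<subseteq> T"
  shows "(\<Sum>X\<in>#M. (if snd X = c then g (fst X) else 0)) = (\<Sum>P\<in>T. g P * count M (P, c))"
  using assms(2)
proof (induction M)
  case empty then show ?case by simp
next
  case (add X M)
  have XT: "fst X \<in> T" using add.prems by simp
  have "(\<Sum>P\<in>T. g P * count (add_mset X M) (P, c)) = (\<Sum>P\<in>T. g P * count M (P, c)) + (\<Sum>P\<in>T. (if P = fst X \<and> snd X = c then g P else 0))"
    by (simp add: sum.distrib[symmetric] algebra_simps) (intro sum.cong, auto)
  also have "(\<Sum>P\<in>T. (if P = fst X \<and> snd X = c then g P else 0)) = (if snd X = c then g (fst X) else 0)"
    using XT assms(1) by (cases "snd X = c") auto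
  finally show ?case using add by simp
qed

lemma sum_mset_snd:
  fixes g :: "'a \<Rightarrow> nat"
  assumes "finite T" "snd ` set_mset M \<subseteq> T"
  shows "(\<Sum>X\<in>#M. (if fst X = a then g (snd X) else 0)) = (\<Sum>Y\<in>T. count M (a, Y) * g Y)"
  using assms(2)
proof (induction M)
  case empty then show ?case by simp
next
  case (add X M)
  have XT: "snd X \<in> T" using add.prems by simp
  have "(\<Sum>Y\<in>T. count (add_mset X M) (a, Y) * g Y) = (\<Sum>Y\<in>T. count M (a, Y) * g Y) + (\<Sum>Y\<in>T. (if Y = snd X \<and> fst X = a then g Y else 0))"
    by (simp add: sum.distrib[symmetric] algebra_simps) (intro sum.cong, auto)
  also have "(\<Sum>Y\<in>T. (if Y = snd X \<and> fst X = a then g Y else 0)) = (if fst X = a then g (snd X) else 0)"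
    using XT assms(1) by (cases "fst X = a") auto
  finally show ?case using add by simp
qed

lemma count_LL:
  assumes "finite T" "fst ` set_mset (Df G) \<subseteq> T"
  shows "count (LL G) (a, b, c) = (\<Sum>P\<in>T. count (Df P) (a, b) * count (Df G) (P, c))"
proof -
  have "count (LL G) (a, b, c) = (\<Sum>X\<in>#Df G. (if snd X = c then count (Df (fst X)) (a, b) else 0))"
    unfolding LL_def count_bindm count_image_triple by (rule arg_cong[where f = sum_mset]) (rule image_mset_cong, auto)
  also have "\<dots> = (\<Sum>P\<in>T. count (Df P) (a, b) * count (Df G) (P, c))"
    by (rule sum_mset_fst[OF assms])
  finally show ?thesis .
qed

lemma count_RR:
  assumes "finite T" "snd ` set_mset (Df G) \<subseteq> T"
  shows "count (RR G) (a, b, c) = (\<Sum>Y\<in>T. count (Df G) (a, Y) * count (Df Y) (b, c))"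
proof -
  have "count (RR G) (a, b, c) = (\<Sum>X\<in>#Df G. (if fst X = a then count (Df (snd X)) (b, c) else 0))"
    unfolding RR_def count_bindm count_image_triple2 by (rule arg_cong[where f = sum_mset]) (rule image_mset_cong, auto)
  also have "\<dots> = (\<Sum>Y\<in>T. count (Df G) (a, Y) * count (Df Y) (b, c))"
    by (rule sum_mset_snd[OF assms])
  finally show ?thesis .
qed

lemma Df_sub_FSle:
  assumes "G \<in> FS Dset n"
  shows "fst ` set_mset (Df G) \<subseteq> FSle Dset n" "snd ` set_mset (Df G) \<subseteq> FSle Dset n"
proof -
  have "\<And>P R. (P, R) \<in># Df G \<Longrightarrow> P \<in> FSle Dset n \<and> R \<in> FSle Dset n"
    using assms Df_weight Df_dec unfolding FS_def FSle_def
    by (metis (mono_tags, lifting) Un_subset_iff dual_order.trans le_add1 le_add2 mem_Collect_eq)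
  then show "fst ` set_mset (Df G) \<subseteq> FSle Dset n" "snd ` set_mset (Df G) \<subseteq> FSle Dset n"
    by force+
qed

lemma coassoc_phi:
  fixes x :: "'d pforest \<Rightarrow> rat"
  assumes D: "finite Dset"
  shows "(\<Sum>P\<in>FSle Dset n. of_nat (count (Df P) (A, C)) * PhiW (FS Dset n) x P Z)
       = (\<Sum>Y\<in>FSle Dset n. of_nat (count (Df Y) (C, Z)) * PhiW (FS Dset n) x A Y)"
proof -
  let ?T = "FSle Dset n" and ?W = "FS Dset n"
  have fT: "finite ?T" using finite_FSle[OF D] .
  have "(\<Sum>P\<in>?T. of_nat (count (Df P) (A, C)) * PhiW ?W x P Z)
      = (\<Sum>P\<in>?T. \<Sum>G\<in>?W. x G * of_nat (count (Df P) (A, C) * count (Df G) (P, Z)))"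
    unfolding PhiW_def by (simp add: sum_distrib_left algebra_simps)
  also have "\<dots> = (\<Sum>G\<in>?W. \<Sum>P\<in>?T. x G * of_nat (count (Df P) (A, C) * count (Df G) (P, Z)))"
    by (rule sum.swap)
  also have "\<dots> = (\<Sum>G\<in>?W. x G * of_nat (count (LL G) (A, C, Z)))"
  proof (rule sum.cong[OF refl])
    fix G assume "G \<in> ?W"
    then show "(\<Sum>P\<in>?T. x G * of_nat (count (Df P) (A, C) * count (Df G) (P, Z))) = x G * of_nat (count (LL G) (A, C, Z))"
      using count_LL[OF fT Df_sub_FSle(1)] by (simp add: sum_distrib_left)
  qed
  also have "\<dots> = (\<Sum>G\<in>?W. x G * of_nat (count (RR G) (A, C, Z)))"
    by (simp add: coassoc(2))
  also have "\<dots> = (\<Sum>G\<in>?W. \<Sum>Y\<in>?T. x G * of_nat (count (Df G) (A, Y) * count (Df Y) (C, Z)))"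
  proof (rule sum.cong[OF refl])
    fix G assume "G \<in> ?W"
    then show "x G * of_nat (count (RR G) (A, C, Z)) = (\<Sum>Y\<in>?T. x G * of_nat (count (Df G) (A, Y) * count (Df Y) (C, Z)))"
      using count_RR[OF fT Df_sub_FSle(2)] by (simp add: sum_distrib_left)
  qed
  also have "\<dots> = (\<Sum>Y\<in>?T. \<Sum>G\<in>?W. x G * of_nat (count (Df G) (A, Y) * count (Df Y) (C, Z)))"
    by (rule sum.swap)
  also have "\<dots> = (\<Sum>Y\<in>?T. of_nat (count (Df Y) (C, Z)) * PhiW ?W x A Y)"
    unfolding PhiW_def by (simp add: sum_distrib_left algebra_simps)
  finally show ?thesis .
qed

lemma all_zero:
  fixes x :: "'d pforest \<Rightarrow> rat"
  assumes D: "finite Dset" and n: "n \<ge> 1"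
    and rows: "\<And>K d C. C \<noteq> [] \<Longrightarrow> PhiW (FS Dset n) x C (K @ [Node d []]) = 0"
  shows "B \<noteq> [] \<Longrightarrow> A \<noteq> [] \<Longrightarrow> PhiW (FS Dset n) x A B = 0"
proof (induction B arbitrary: A rule: measure_induct_rule[of mu])
  case (less B)
  let ?T = "FSle Dset n" and ?W = "FS Dset n"
  have fT: "finite ?T" using finite_FSle[OF D] .
  show ?case
  proof (cases "B \<in> ?T")
    case False then show ?thesis by (rule phi_outside_B)
  next
    case BT: True
    from \<open>B \<noteq> []\<close> show ?thesis
    proof (cases rule: forest_shape)
      case (1 K d)
      then show ?thesis using rows[OF \<open>A \<noteq> []\<close>] by simp
    next
      case (2 K d C)
      let ?Z = "K @ [Node d []]"
      have L: "(\<Sum>P\<in>?T. of_nat (count (Df P) (A, C)) * PhiW ?W x P ?Z) = 0"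
      proof (rule sum.neutral, rule ballI)
        fix P assume "P \<in> ?T"
        show "of_nat (count (Df P) (A, C)) * PhiW ?W x P ?Z = 0"
        proof (cases "P = []")
          case True then show ?thesis using \<open>A \<noteq> []\<close> by simp
        next
          case False then show ?thesis using rows by simp
        qed
      qed
      have R: "(\<Sum>Y\<in>?T. of_nat (count (Df Y) (C, ?Z)) * PhiW ?W x A Y)
          = of_nat (count (Df B) (C, ?Z)) * PhiW ?W x A B"
      proof (rule sum_single_nz[OF fT BT])
        fix Y assume Y: "Y \<in> ?T" "Y \<noteq> B"
        show "of_nat (count (Df Y) (C, ?Z)) * PhiW ?W x A Y = 0"
        proof (cases "count (Df Y) (C, ?Z) = 0")
          case False
          then have m: "(C, ?Z) \<in># Df Y" by simp
          have "Y \<noteq> K @ [Node d C]" using Y(2) 2 by simp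
          from lead_mu[OF m this] have "mu Y < mu B" using 2 by simp
          moreover have "Y \<noteq> []"
          proof
            assume "Y = []"
            then have "fweight C + fweight ?Z = 0" using Df_weight[OF m] by simp
            then show False by simp
          qed
          ultimately have "PhiW ?W x A Y = 0" using less.IH \<open>A \<noteq> []\<close> by blast
          then show ?thesis by simp
        qed simp
      qed
      have c: "count (Df B) (C, ?Z) \<noteq> 0" using lead_mem[of C K d] 2 by simp
      have "of_nat (count (Df B) (C, ?Z)) * PhiW ?W x A B = 0"
        using coassoc_phi[OF D, where A=A and C=C and Z="?Z" and x=x and n=n] L R by simp
      then show ?thesis using c by (metis mult_eq_0_iff of_nat_eq_0_iff)
    qed
  qed
qed


lemma lookup_qscale[simp]: "Poly_Mapping.lookup (qscale c p) k = c * Poly_Mapping.lookup p k"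
  unfolding qscale_def map.rep_eq by (simp add: when_def)

lemma vs_qscale: "vector_space (qscale :: rat \<Rightarrow> ('a \<Rightarrow>\<^sub>0 rat) \<Rightarrow> ('a \<Rightarrow>\<^sub>0 rat))"
  by unfold_locales (auto intro!: poly_mapping_eqI simp: lookup_add algebra_simps)

lemma HD_hom_iff: "in_HD Dset p \<and> homogeneous n p \<longleftrightarrow> Poly_Mapping.keys p \<subseteq> FS Dset n"
  unfolding in_HD_def homogeneous_def FS_def fdec_def by auto

lemma coprod_PhiW:
  assumes D: "finite Dset" and k: "Poly_Mapping.keys p \<subseteq> FS Dset n"
  shows "coprod p A B = PhiW (FS Dset n) (Poly_Mapping.lookup p) A B"
  unfolding coprod_def PhiW_def coprod_coeff_Df
  by (rule sum.mono_neutral_left[OF finite_FS[OF D] k]) (auto simp: in_keys_iff)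

lemma PhiW_R_nil:
  assumes D: "finite Dset" and k: "\<And>G. x G \<noteq> 0 \<Longrightarrow> G \<in> FS Dset n"
  shows "PhiW (FS Dset n) x A [] = x A"
proof -
  have "PhiW (FS Dset n) x A [] = (\<Sum>G\<in>FS Dset n. if G = A then x G else 0)"
    unfolding PhiW_def count_Df_R by (rule sum.cong) auto
  also have "\<dots> = x A" using k finite_FS[OF D] by (cases "A \<in> FS Dset n") auto
  finally show ?thesis .
qed

lemma PhiW_P_nil:
  assumes D: "finite Dset" and k: "\<And>G. x G \<noteq> 0 \<Longrightarrow> G \<in> FS Dset n"
  shows "PhiW (FS Dset n) x [] B = x B"
proof -
  have "PhiW (FS Dset n) x [] B = (\<Sum>G\<in>FS Dset n. if G = B then x G else 0)"
    unfolding PhiW_def count_Df_P by (rule sum.cong) auto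
  also have "\<dots> = x B" using k finite_FS[OF D] by (cases "B \<in> FS Dset n") auto
  finally show ?thesis .
qed

lemma prim_space_iff:
  assumes D: "finite Dset" and n: "n \<ge> 1"
  shows "p \<in> prim_space Dset n \<longleftrightarrow> Poly_Mapping.keys p \<subseteq> FS Dset n \<and>
     (\<forall>A B. A \<noteq> [] \<longrightarrow> B \<noteq> [] \<longrightarrow> PhiW (FS Dset n) (Poly_Mapping.lookup p) A B = 0)"
proof -
  have "p \<in> prim_space Dset n \<longleftrightarrow> Poly_Mapping.keys p \<subseteq> FS Dset n \<and> primitive p"
    unfolding prim_space_def using HD_hom_iff by blast
  moreover have "primitive p \<longleftrightarrow> (\<forall>A B. A \<noteq> [] \<longrightarrow> B \<noteq> [] \<longrightarrow> PhiW (FS Dset n) (Poly_Mapping.lookup p) A B = 0)"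
    if k: "Poly_Mapping.keys p \<subseteq> FS Dset n"
  proof -
    have supp: "\<And>G. Poly_Mapping.lookup p G \<noteq> 0 \<Longrightarrow> G \<in> FS Dset n" using k by (auto simp: in_keys_iff)
    have e: "Poly_Mapping.lookup p [] = 0" using supp n by (force simp: FS_def)
    have "primitive p \<longleftrightarrow> (\<forall>A B. PhiW (FS Dset n) (Poly_Mapping.lookup p) A B =
      (if B = [] then Poly_Mapping.lookup p A else 0) + (if A = [] then Poly_Mapping.lookup p B else 0))"
      unfolding primitive_def coprod_PhiW[OF D k] ..
    also have "\<dots> \<longleftrightarrow> (\<forall>A B. A \<noteq> [] \<longrightarrow> B \<noteq> [] \<longrightarrow> PhiW (FS Dset n) (Poly_Mapping.lookup p) A B = 0)"
    proof
      assume "\<forall>A B. PhiW (FS Dset n) (Poly_Mapping.lookup p) A B =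
        (if B = [] then Poly_Mapping.lookup p A else 0) + (if A = [] then Poly_Mapping.lookup p B else 0)"
      then show "\<forall>A B. A \<noteq> [] \<longrightarrow> B \<noteq> [] \<longrightarrow> PhiW (FS Dset n) (Poly_Mapping.lookup p) A B = 0" by simp
    next
      assume H: "\<forall>A B. A \<noteq> [] \<longrightarrow> B \<noteq> [] \<longrightarrow> PhiW (FS Dset n) (Poly_Mapping.lookup p) A B = 0"
      show "\<forall>A B. PhiW (FS Dset n) (Poly_Mapping.lookup p) A B =
        (if B = [] then Poly_Mapping.lookup p A else 0) + (if A = [] then Poly_Mapping.lookup p B else 0)"
      proof (intro allI)
        fix A B
        show "PhiW (FS Dset n) (Poly_Mapping.lookup p) A B =
          (if B = [] then Poly_Mapping.lookup p A else 0) + (if A = [] then Poly_Mapping.lookup p B else 0)"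
        proof (cases "B = []")
          case True
          then show ?thesis using PhiW_R_nil[OF D supp] e by simp
        next
          case False
          then show ?thesis using PhiW_P_nil[OF D supp] H by (cases "A = []") auto
        qed
      qed
    qed
    finally show ?thesis .
  qed
  ultimately show ?thesis by blast
qed


lemma PhiW_lin:
  "PhiW W (\<lambda>G. f G - (\<Sum>e\<in>E. c e * g e G)) A B = PhiW W f A B - (\<Sum>e\<in>E. c e * PhiW W (g e) A B)"
proof -
  have "PhiW W (\<lambda>G. f G - (\<Sum>e\<in>E. c e * g e G)) A B
      = PhiW W f A B - (\<Sum>G\<in>W. \<Sum>e\<in>E. c e * (g e G * of_nat (count (Df G) (A, B))))"
    unfolding PhiW_def by (simp add: algebra_simps sum_subtractf sum_distrib_left sum_distrib_right)
  also have "(\<Sum>G\<in>W. \<Sum>e\<in>E. c e * (g e G * of_nat (count (Df G) (A, B)))) = (\<Sum>e\<in>E. c e * PhiW W (g e) A B)"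
    unfolding PhiW_def by (subst sum.swap) (simp add: sum_distrib_left)
  finally show ?thesis .
qed

lemma prim_dim_pos:
  fixes Dset :: "'d set"
  assumes D: "finite Dset" and n: "n \<ge> 1"
  shows "prim_dim Dset n = card (EF Dset n)"
proof -
  interpret V: vector_space "qscale :: rat \<Rightarrow> ('d pforest \<Rightarrow>\<^sub>0 rat) \<Rightarrow> ('d pforest \<Rightarrow>\<^sub>0 rat)"
    by (rule vs_qscale)
  let ?W = "FS Dset n" and ?E = "EF Dset n"
  have fW: "finite ?W" using finite_FS[OF D] .
  have fE: "finite ?E" using finite_subset[OF EF_sub fW] .
  define P where "P e x \<longleftrightarrow> (\<forall>G. x G \<noteq> 0 \<longrightarrow> G \<in> ?W) \<and> (\<forall>e'\<in>?E. x e' = (if e' = e then 1 else 0))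
      \<and> (\<forall>K d C. C \<noteq> [] \<longrightarrow> PhiW ?W x C (K @ [Node d []]) = 0)" for e and x :: "'d pforest \<Rightarrow> rat"
  define X where "X e = (SOME x. P e x)" for e
  have PX: "P e (X e)" for e
  proof -
    have ex: "\<exists>x. P e x"
      using exist_rows[OF D n, of "\<lambda>G. if G = e then 1 else 0"] unfolding P_def by blast
    have "P e (SOME x. P e x)" using someI_ex[OF ex] .
    then show ?thesis by (simp only: X_def)
  qed
  have X1: "X e G \<noteq> 0 \<Longrightarrow> G \<in> ?W" for e G using PX[of e] by (simp add: P_def)
  have X2: "e' \<in> ?E \<Longrightarrow> X e e' = (if e' = e then 1 else 0)" for e e' using PX[of e] by (simp add: P_def)
  have X3: "C \<noteq> [] \<Longrightarrow> PhiW ?W (X e) C (K @ [Node d []]) = 0" for e K d C using PX[of e] by (simp add: P_def)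
  have finX: "finite {G. X e G \<noteq> 0}" for e
  proof -
    have "{G. X e G \<noteq> 0} \<subseteq> ?W" using X1 by auto
    then show ?thesis using fW by (rule finite_subset)
  qed
  define b where "b e = Abs_poly_mapping (X e)" for e
  have lb: "Poly_Mapping.lookup (b e) = X e" for e unfolding b_def using finX by simp
  have b_prim: "b e \<in> prim_space Dset n" for e
  proof -
    have "Poly_Mapping.keys (b e) \<subseteq> ?W" using X1 by (auto simp: in_keys_iff lb)
    moreover have "\<forall>A B. A \<noteq> [] \<longrightarrow> B \<noteq> [] \<longrightarrow> PhiW ?W (Poly_Mapping.lookup (b e)) A B = 0"
      unfolding lb using all_zero[OF D n X3] by blast
    ultimately show ?thesis using prim_space_iff[OF D n] by blast
  qed
  have inj: "inj_on b ?E"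
  proof (rule inj_onI)
    fix e e' assume "e \<in> ?E" "e' \<in> ?E" "b e = b e'"
    then have "X e e = X e' e" using lb by metis
    then show "e = e'" using X2 \<open>e \<in> ?E\<close> by (auto split: if_splits)
  qed
  let ?B = "b ` ?E"
  have repr: "p = (\<Sum>e\<in>?E. qscale (Poly_Mapping.lookup p e) (b e))" if p: "p \<in> prim_space Dset n" for p
  proof -
    have pk: "Poly_Mapping.keys p \<subseteq> ?W" and pz: "\<forall>A B. A \<noteq> [] \<longrightarrow> B \<noteq> [] \<longrightarrow> PhiW ?W (Poly_Mapping.lookup p) A B = 0"
      using p prim_space_iff[OF D n] by blast+
    define z where "z G = Poly_Mapping.lookup p G - (\<Sum>e\<in>?E. Poly_Mapping.lookup p e * X e G)" for G
    have "z G = 0" for G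
    proof (rule inj_rows[OF D n])
      fix G assume "z G \<noteq> 0"
      have "Poly_Mapping.lookup p G \<noteq> 0 \<or> (\<exists>e. X e G \<noteq> 0)"
      proof (rule ccontr)
        assume "\<not> (Poly_Mapping.lookup p G \<noteq> 0 \<or> (\<exists>e. X e G \<noteq> 0))"
        then have "Poly_Mapping.lookup p G = 0" "\<And>e. X e G = 0" by auto
        then have "z G = 0" unfolding z_def by simp
        then show False using \<open>z G \<noteq> 0\<close> by simp
      qed
      then show "G \<in> ?W" using pk X1 by (auto simp: in_keys_iff)
    next
      fix K d C :: "'d pforest" and dd
      assume C: "C \<noteq> []"
      have "PhiW ?W z C (K @ [Node dd []]) = PhiW ?W (Poly_Mapping.lookup p) C (K @ [Node dd []])
          - (\<Sum>e\<in>?E. Poly_Mapping.lookup p e * PhiW ?W (X e) C (K @ [Node dd []]))"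
        unfolding z_def by (rule PhiW_lin)
      also have "PhiW ?W (Poly_Mapping.lookup p) C (K @ [Node dd []]) = 0" using pz C by simp
      also have "(\<Sum>e\<in>?E. Poly_Mapping.lookup p e * PhiW ?W (X e) C (K @ [Node dd []])) = 0"
        using X3[OF C] by simp
      finally show "PhiW ?W z C (K @ [Node dd []]) = 0" by simp
    next
      fix e0 assume e0: "e0 \<in> ?E"
      have "(\<Sum>e\<in>?E. Poly_Mapping.lookup p e * X e e0) = (\<Sum>e\<in>?E. if e = e0 then Poly_Mapping.lookup p e else 0)"
        by (rule sum.cong) (auto simp: X2[OF e0])
      also have "\<dots> = Poly_Mapping.lookup p e0" using e0 fE by simp
      finally show "z e0 = 0" unfolding z_def by simp
    qed
    note zz = this
    show ?thesis
    proof (rule poly_mapping_eqI)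
      fix k
      have "z k = 0" by (rule zz)
      then have "Poly_Mapping.lookup p k = (\<Sum>e\<in>?E. Poly_Mapping.lookup p e * X e k)"
        unfolding z_def by simp
      then show "Poly_Mapping.lookup p k = Poly_Mapping.lookup (\<Sum>e\<in>?E. qscale (Poly_Mapping.lookup p e) (b e)) k"
        by (simp add: lookup_sum lb)
    qed
  qed
  have indep: "V.independent ?B"
  proof (rule V.independent_if_scalars_zero)
    show "finite ?B" using fE by simp
    fix f v assume s: "(\<Sum>v\<in>?B. qscale (f v) v) = 0" and v: "v \<in> ?B"
    then obtain e0 where e0: "e0 \<in> ?E" "v = b e0" by blast
    have "(\<Sum>e\<in>?E. qscale (f (b e)) (b e)) = 0" using s by (simp add: sum.reindex[OF inj])
    then have "Poly_Mapping.lookup (\<Sum>e\<in>?E. qscale (f (b e)) (b e)) e0 = 0" by simp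
    then have "(\<Sum>e\<in>?E. f (b e) * X e e0) = 0" by (simp add: lookup_sum lb)
    moreover have "(\<Sum>e\<in>?E. f (b e) * X e e0) = (\<Sum>e\<in>?E. if e = e0 then f (b e) else 0)"
      by (rule sum.cong) (auto simp: X2[OF e0(1)])
    ultimately show "f v = 0" using e0 fE by simp
  qed
  have span: "V.span ?B = V.span (prim_space Dset n)"
  proof (subst V.span_eq, intro conjI)
    show "?B \<subseteq> V.span (prim_space Dset n)" using b_prim V.span_superset by blast
    show "prim_space Dset n \<subseteq> V.span ?B"
    proof
      fix p assume p: "p \<in> prim_space Dset n"
      have "(\<Sum>e\<in>?E. qscale (Poly_Mapping.lookup p e) (b e)) \<in> V.span ?B"
        by (intro V.span_sum V.span_scale V.span_base) auto
      then show "p \<in> V.span ?B" using repr[OF p] by simp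
    qed
  qed
  have "prim_dim Dset n = V.dim (prim_space Dset n)" unfolding prim_dim_def by simp
  also have "\<dots> = card ?B" using V.dim_eq_card[OF span indep] .
  also have "\<dots> = card ?E" using card_image[OF inj] .
  finally show ?thesis .
qed


lemma prim_dim_zero:
  fixes Dset :: "'d set"
  assumes D: "finite Dset"
  shows "prim_dim Dset 0 = 0"
proof -
  interpret V: vector_space "qscale :: rat \<Rightarrow> ('d pforest \<Rightarrow>\<^sub>0 rat) \<Rightarrow> ('d pforest \<Rightarrow>\<^sub>0 rat)"
    by (rule vs_qscale)
  have ps: "prim_space Dset 0 = {0}"
  proof (intro set_eqI iffI)
    fix p assume p: "p \<in> prim_space Dset 0"
    then have k: "Poly_Mapping.keys p \<subseteq> FS Dset 0" and pr: "primitive p"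
      unfolding prim_space_def using HD_hom_iff by blast+
    have supp: "\<And>G. Poly_Mapping.lookup p G \<noteq> 0 \<Longrightarrow> G \<in> FS Dset 0" using k by (auto simp: in_keys_iff)
    have "coprod p [] [] = Poly_Mapping.lookup p [] + Poly_Mapping.lookup p []"
      using pr unfolding primitive_def by simp
    moreover have "coprod p [] [] = Poly_Mapping.lookup p []"
      using coprod_PhiW[OF D k] PhiW_R_nil[OF D supp] by simp
    ultimately have z: "Poly_Mapping.lookup p [] = 0" by simp
    have "Poly_Mapping.lookup p G = 0" for G
      using supp[of G] z by (cases "G = []") (auto simp: FS_0)
    then show "p \<in> {0}" by (auto intro: poly_mapping_eqI)
  next
    fix p :: "'d pforest \<Rightarrow>\<^sub>0 rat" assume "p \<in> {0}"
    then show "p \<in> prim_space Dset 0"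
      by (simp add: prim_space_def in_HD_def homogeneous_def primitive_def coprod_def)
  qed
  have sp: "V.span {} = V.span (prim_space Dset 0)" unfolding ps by (simp add: V.span_empty)
  have ind: "V.independent {}" by (rule V.independent_empty)
  have "V.dim (prim_space Dset 0) = 0" using V.dim_eq_card[OF sp ind] by simp
  then show ?thesis unfolding prim_dim_def by simp
qed

lemma prim_dim_Suc:
  assumes D: "finite Dset"
  shows "prim_dim Dset (Suc k) = card Dset ^ Suc k * catn k"
  using prim_dim_pos[OF D, of "Suc k"] card_EF[OF D, of k] by simp

theorem proposition64:
  fixes Dset :: "'d set"
  assumes "finite Dset" and "Dset \<noteq> {}"
  shows "(\<forall>x::real. \<bar>x\<bar> < 1 / (4 * real (card Dset)) \<longrightarrow>
           (\<lambda>n. real (prim_dim Dset n) * x ^ n) sums ((1 - sqrt (1 - 4 * real (card Dset) * x)) / 2))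
       \<and> (\<forall>n\<ge>1. real (prim_dim Dset n) =
            fact (2 * n - 2) / (fact n * fact (n - 1)) * real (card Dset) ^ n)
       \<and> (\<forall>n\<ge>1. prim_dim Dset n = card Dset ^ n * tau n)"
proof (intro conjI allI impI)
  have D: "finite Dset" by fact
  have cpos: "card Dset > 0" using assms card_gt_0_iff by blast
  fix x :: real
  assume "\<bar>x\<bar> < 1 / (4 * real (card Dset))"
  then show "(\<lambda>n. real (prim_dim Dset n) * x ^ n) sums ((1 - sqrt (1 - 4 * real (card Dset) * x)) / 2)"
    using series_main[OF cpos, of "prim_dim Dset"] prim_dim_zero[OF D] prim_dim_Suc[OF D] by blast
next
  fix n :: nat assume n: "n \<ge> 1"
  then obtain k where k: "n = Suc k" by (cases n) auto
  have "real (prim_dim Dset n) = real (card Dset) ^ n * ccf k"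
    using prim_dim_Suc[OF assms(1), of k] k catn_ccf[of k] by simp
  also have "\<dots> = fact (2 * n - 2) / (fact n * fact (n - 1)) * real (card Dset) ^ n"
    unfolding ccf_def k by simp
  finally show "real (prim_dim Dset n) = fact (2 * n - 2) / (fact n * fact (n - 1)) * real (card Dset) ^ n" .
next
  fix n :: nat assume n: "n \<ge> 1"
  then obtain k where k: "n = Suc k" by (cases n) auto
  show "prim_dim Dset n = card Dset ^ n * tau n"
    using prim_dim_Suc[OF assms(1), of k] tau_eq[of k] k by simp
qed


end
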